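(* For $\alpha>-1/2$ define the infinite matrix $h_{\mathbb{Z}}^{[\alpha]}$ by $$\big(h_{\mathbb{Z}}^{[\alpha]}\big)_{jk}=4^\alpha\int_0^1\sin^{2\alpha}\Big(\frac{\pi x}{2}\Big)\cos(|j-k|\pi x)\,\mathrm{d}x,\qquad j,k\in\mathbb{Z}.$$ For $n,m\in\mathbb{N}$ with $n\le m$ let $\Lambda_0=[-n,n]\cap\mathbb{Z}$ and $\Lambda=[-m,m]\cap\mathbb{Z}$, and let $h_\Lambda^{[\alpha]}=\iota_{\Lambda_0}^*(\overline{h}^{(q)}_\Lambda)^\alpha\iota_{\Lambda_0}$, with entries indexed by $j,k\in\{1,\dots,|\Lambda_0|\}$. Then, uniformly in $j,k\in\{1,\dots,|\Lambda_0|\}$, $$\big(h_\Lambda^{[\alpha]}\big)_{jk}=\big(h_{\mathbb{Z}}^{[\alpha]}\big)_{jk}+\mathcal{O}\Big(\frac{|\Lambda_0|}{|\Lambda|}\Big)\quad\text{for }\alpha\ge0,$$ $$\big(h_\Lambda^{[\alpha]}\big)_{jk}=\big(h_{\mathbb{Z}}^{[\alpha]}\big)_{jk}+\mathcal{O}\Big(\frac{|\Lambda|^{-2\alpha}+|\Lambda_0|^{1-2\alpha}}{|\Lambda|}\Big)\quad\text{for }\alpha\in(-1/2,0).$$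
   Context: $\overline{h}^{(q)}_\Lambda$ is the $|\Lambda|\times|\Lambda|$ matrix with entries $2$ on the diagonal, $-1$ for $|x-y|=1$, and $0$ otherwise (positive definite); $\iota_{\Lambda_0}:\mathbb{R}^{|\Lambda_0|}\hookrightarrow\mathbb{R}^{|\Lambda|}$ is the canonical embedding corresponding to $\Lambda_0\subset\Lambda$. The $\mathcal{O}$-terms are bounded by a constant (depending on $\alpha$ only) times the displayed quantity, uniformly in $n\le m$ and $j,k$. *)

theory Defs
  imports "HOL-Analysis.Analysis"
begin

definition mat_rpow :: "'i set \<Rightarrow> ('i \<Rightarrow> 'i \<Rightarrow> real) \<Rightarrow> real \<Rightarrow> ('i \<Rightarrow> 'i \<Rightarrow> real)" where
  "mat_rpow I A a = (SOME B. \<exists>U d.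
      (\<forall>i\<in>I. \<forall>j\<in>I. (\<Sum>l\<in>I. U l i * U l j) = (if i = j then 1 else 0)) \<and>
      (\<forall>l\<in>I. d l > 0) \<and>
      (\<forall>i\<in>I. \<forall>j\<in>I. A i j = (\<Sum>l\<in>I. U i l * d l * U j l)) \<and>
      (\<forall>i j. B i j = (if i \<in> I \<and> j \<in> I then (\<Sum>l\<in>I. U i l * d l powr a * U j l) else 0)))"

definition hbar :: "int \<Rightarrow> int \<Rightarrow> real" where
  "hbar x y = (if x = y then 2 else if \<bar>x - y\<bar> = 1 then -1 else 0)"

text \<open>h_Lambda^[alpha] = iota^* (hbar_Lambda)^alpha iota, with Lambda0 = [-n,n], Lambda = [-m,m],
  entries indexed by j,k in {1..2n+1}; index j corresponds to the site j - n - 1 in Lambda0.\<close>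
definition hLambda :: "nat \<Rightarrow> nat \<Rightarrow> real \<Rightarrow> int \<Rightarrow> int \<Rightarrow> real" where
  "hLambda n m a j k = mat_rpow {-int m..int m} hbar a (j - int n - 1) (k - int n - 1)"

definition hZ :: "real \<Rightarrow> int \<Rightarrow> int \<Rightarrow> real" where
  "hZ a j k = 4 powr a *
     (LBINT x=0..1. sin (pi * x / 2) powr (2 * a) * cos (real_of_int \<bar>j - k\<bar> * pi * x))"

end

theory Submission
  imports Defs "HOL-Computational_Algebra.Polynomial"
begin
primrec mp :: "'i set \<Rightarrow> ('i \<Rightarrow> 'i \<Rightarrow> real) \<Rightarrow> nat \<Rightarrow> 'i \<Rightarrow> 'i \<Rightarrow> real" where
  "mp I A 0 i j = (if i = j then 1 else 0)"
| "mp I A (Suc k) i j = (\<Sum>z\<in>I. A i z * mp I A k z j)"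

lemma mp_decomp:
  assumes fin: "finite I"
    and orth: "\<forall>i\<in>I. \<forall>j\<in>I. (\<Sum>l\<in>I. U l i * U l j) = (if i = j then 1 else 0)"
    and dec: "\<forall>i\<in>I. \<forall>j\<in>I. A i j = (\<Sum>l\<in>I. U i l * d l * U j l)"
    and "i \<in> I" "j \<in> I"
  shows "mp I A (Suc k) i j = (\<Sum>l\<in>I. U i l * d l ^ Suc k * U j l)"
  using assms(4,5)
proof (induction k arbitrary: i j)
  case 0
  have "mp I A 1 i j = (\<Sum>z\<in>I. (if z = j then A i z else 0))"
    by (simp add: if_distrib cong: if_cong)
  also have "\<dots> = A i j" using 0 fin by simp
  finally show ?case using dec 0 by simp
next
  case (Suc k)
  have "mp I A (Suc (Suc k)) i j = (\<Sum>z\<in>I. (\<Sum>l\<in>I. U i l * d l * U z l) * (\<Sum>l'\<in>I. U z l' * d l' ^ Suc k * U j l'))"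
    using Suc dec by (auto intro!: sum.cong)
  also have "\<dots> = (\<Sum>z\<in>I. \<Sum>l\<in>I. \<Sum>l'\<in>I. (U i l * d l) * (U z l * U z l') * (d l' ^ Suc k * U j l'))"
    by (simp add: sum_product mult_ac)
  also have "\<dots> = (\<Sum>l\<in>I. \<Sum>l'\<in>I. \<Sum>z\<in>I. (U i l * d l) * (U z l * U z l') * (d l' ^ Suc k * U j l'))"
    by (subst sum.swap, rule sum.cong, simp, rule sum.swap)
  also have "\<dots> = (\<Sum>l\<in>I. \<Sum>l'\<in>I. (U i l * d l) * (\<Sum>z\<in>I. U z l * U z l') * (d l' ^ Suc k * U j l'))"
    by (simp add: sum_distrib_left sum_distrib_right)
  also have "\<dots> = (\<Sum>l\<in>I. \<Sum>l'\<in>I. (if l = l' then (U i l * d l) * (d l' ^ Suc k * U j l') else 0))"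
    using orth by (intro sum.cong refl) auto
  also have "\<dots> = (\<Sum>l\<in>I. U i l * d l ^ Suc (Suc k) * U j l)"
    using fin by (simp add: mult_ac)
  finally show ?case .
qed

lemma interp:
  fixes f :: "real \<Rightarrow> real"
  shows "finite S \<Longrightarrow> 0 \<notin> S \<Longrightarrow> \<exists>p::real poly. poly p 0 = 0 \<and> (\<forall>s\<in>S. poly p s = f s)"
proof (induction S rule: finite_induct)
  case empty
  then show ?case by (intro exI[of _ 0]) simp
next
  case (insert t S)
  then obtain p where p: "poly p 0 = 0" "\<forall>s\<in>S. poly p s = f s" by auto
  define w where "w = [:0,1:] * (\<Prod>s\<in>S. [:-s,1:])"
  have pw: "poly w x = x * (\<Prod>s\<in>S. x - s)" for x
    by (simp add: w_def poly_prod)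
  have wt: "poly w t \<noteq> 0" using insert by (simp add: pw)
  define q where "q = p + smult ((f t - poly p t) / poly w t) w"
  have "poly q s = f s" if "s \<in> S" for s
    using that p insert by (simp add: q_def pw)
  moreover have "poly q t = f t" using wt by (simp add: q_def)
  moreover have "poly q 0 = 0" using p by (simp add: q_def pw)
  ultimately show ?case by (intro exI[of _ q]) auto
qed

lemma poly_as_sum0:
  fixes p :: "real poly"
  assumes "poly p 0 = 0"
  shows "poly p x = (\<Sum>k<degree p. coeff p (Suc k) * x ^ Suc k)"
proof -
  have "poly p x = (\<Sum>i<Suc (degree p). coeff p i * x ^ i)"
    by (simp add: poly_altdef lessThan_Suc_atMost)
  also have "\<dots> = coeff p 0 + (\<Sum>k<degree p. coeff p (Suc k) * x ^ Suc k)"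
    by (subst sum.lessThan_Suc_shift) simp
  also have "coeff p 0 = 0" using assms by (simp add: poly_0_coeff_0)
  finally show ?thesis by simp
qed

lemma decomp_poly:
  fixes p :: "real poly"
  assumes fin: "finite I"
    and orth: "\<forall>i\<in>I. \<forall>j\<in>I. (\<Sum>l\<in>I. U l i * U l j) = (if i = j then 1 else 0)"
    and dec: "\<forall>i\<in>I. \<forall>j\<in>I. A i j = (\<Sum>l\<in>I. U i l * d l * U j l)"
    and p0: "poly p 0 = 0" and pS: "\<forall>l\<in>I. poly p (d l) = d l powr a"
    and ij: "i \<in> I" "j \<in> I"
  shows "(\<Sum>l\<in>I. U i l * d l powr a * U j l) = (\<Sum>k<degree p. coeff p (Suc k) * mp I A (Suc k) i j)"
proof -
  have "(\<Sum>l\<in>I. U i l * d l powr a * U j l) = (\<Sum>l\<in>I. \<Sum>k<degree p. coeff p (Suc k) * (U i l * d l ^ Suc k * U j l))"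
    using pS by (intro sum.cong refl) (simp add: poly_as_sum0[OF p0] sum_distrib_left sum_distrib_right mult_ac flip: pS)
  also have "\<dots> = (\<Sum>k<degree p. coeff p (Suc k) * (\<Sum>l\<in>I. U i l * d l ^ Suc k * U j l))"
    by (subst sum.swap) (simp add: sum_distrib_left)
  also have "\<dots> = (\<Sum>k<degree p. coeff p (Suc k) * mp I A (Suc k) i j)"
    using mp_decomp[OF fin orth dec ij] by simp
  finally show ?thesis .
qed

lemma rpow_eval:
  fixes U :: "'i \<Rightarrow> 'i \<Rightarrow> real"
  assumes fin: "finite I"
    and orth: "\<forall>i\<in>I. \<forall>j\<in>I. (\<Sum>l\<in>I. U l i * U l j) = (if i = j then 1 else 0)"
    and pos: "\<forall>l\<in>I. d l > 0"
    and dec: "\<forall>i\<in>I. \<forall>j\<in>I. A i j = (\<Sum>l\<in>I. U i l * d l * U j l)"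
  shows "mat_rpow I A a = (\<lambda>i j. if i \<in> I \<and> j \<in> I then (\<Sum>l\<in>I. U i l * d l powr a * U j l) else 0)"
    (is "_ = ?B0")
proof -
  let ?P = "\<lambda>B. \<exists>U d.
      (\<forall>i\<in>I. \<forall>j\<in>I. (\<Sum>l\<in>I. U l i * U l j) = (if i = j then 1 else 0)) \<and>
      (\<forall>l\<in>I. d l > 0) \<and>
      (\<forall>i\<in>I. \<forall>j\<in>I. A i j = (\<Sum>l\<in>I. U i l * d l * U j l)) \<and>
      (\<forall>i j. B i j = (if i \<in> I \<and> j \<in> I then (\<Sum>l\<in>I. U i l * d l powr a * U j l) else 0))"
  have ex: "?P ?B0" using assms by blast
  have key: "B = ?B0" if "?P B" for B
  proof -
    from that obtain V e where
      orthV: "\<forall>i\<in>I. \<forall>j\<in>I. (\<Sum>l\<in>I. V l i * V l j) = (if i = j then 1 else 0)"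
      and posV: "\<forall>l\<in>I. e l > 0"
      and decV: "\<forall>i\<in>I. \<forall>j\<in>I. A i j = (\<Sum>l\<in>I. V i l * e l * V j l)"
      and B: "\<forall>i j. B i j = (if i \<in> I \<and> j \<in> I then (\<Sum>l\<in>I. V i l * e l powr a * V j l) else 0)"
      by blast
    obtain p :: "real poly" where p: "poly p 0 = 0" "\<forall>s\<in>d ` I \<union> e ` I. poly p s = s powr a"
      using interp[of "d ` I \<union> e ` I" "\<lambda>s. s powr a"] fin pos posV by fastforce
    show ?thesis
    proof (intro ext)
      fix i j
      show "B i j = ?B0 i j"
      proof (cases "i \<in> I \<and> j \<in> I")
        case True
        have "B i j = (\<Sum>k<degree p. coeff p (Suc k) * mp I A (Suc k) i j)"
          using B decomp_poly[OF fin orthV decV p(1), of a i j] p(2) True by simp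
        also have "\<dots> = ?B0 i j"
          using decomp_poly[OF fin orth dec p(1), of a i j] p(2) True by simp
        finally show ?thesis .
      next
        case False
        then show ?thesis using B by auto
      qed
    qed
  qed
  have "mat_rpow I A a = (SOME B. ?P B)" by (simp add: mat_rpow_def)
  also have "\<dots> = ?B0" using someI_ex[OF exI[of ?P, OF ex]] key by blast
  finally show ?thesis .
qed

lemma sin_diff_half: "sin ((x::real) + t/2) - sin (x - t/2) = 2 * sin (t/2) * cos x"
  by (simp add: sin_add sin_diff)

lemma cos_sum0:
  fixes Mn :: nat and r :: int
  assumes M: "Mn > 0" and r: "\<bar>r\<bar> < 2 * int Mn"
  shows "(\<Sum>l<Mn. cos (real_of_int r * (pi * real l / real Mn))) =
           (if r = 0 then real Mn else if even r then 0 else 1)"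
proof (cases "r = 0")
  case True then show ?thesis by simp
next
  case False
  define t where "t = real_of_int r * pi / real Mn"
  have targ: "real_of_int r * (pi * real l / real Mn) = real l * t" for l
    by (simp add: t_def)
  have s0: "sin (t/2) \<noteq> 0"
  proof
    assume "sin (t/2) = 0"
    then obtain i :: int where i: "t/2 = of_int i * pi" by (auto simp: sin_zero_iff_int2)
    then have "real_of_int r = 2 * real Mn * of_int i" using M by (simp add: t_def field_simps)
    then have "real_of_int r = real_of_int (2 * int Mn * i)" by simp
    then have ri: "r = 2 * int Mn * i" by (simp only: of_int_eq_iff)
    show False
    proof (cases "i = 0")
      case True then show False using ri False by simp
    next
      case False
      then have "\<bar>i\<bar> \<ge> 1" by simp
      then have "\<bar>r\<bar> \<ge> 2 * int Mn" using ri M by (simp add: abs_mult)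
      then show False using r by simp
    qed
  qed
  define F where "F l = sin ((real l - 1/2) * t)" for l :: nat
  have step: "F (Suc l) - F l = 2 * sin (t/2) * cos (real l * t)" for l
  proof -
    have "F (Suc l) - F l = sin (real l * t + t/2) - sin (real l * t - t/2)"
      by (simp add: F_def algebra_simps)
    also have "\<dots> = 2 * sin (t/2) * cos (real l * t)" by (rule sin_diff_half)
    finally show ?thesis .
  qed
  have FM: "(real Mn - 1/2) * t = pi * real_of_int r - t/2"
    using M by (simp add: t_def field_simps)
  have "2 * sin (t/2) * (\<Sum>l<Mn. cos (real l * t)) = (\<Sum>l<Mn. F (Suc l) - F l)"
    by (simp add: step sum_distrib_left)
  also have "\<dots> = F Mn - F 0" by (rule sum_lessThan_telescope)
  also have "F Mn = sin (pi * real_of_int r - t/2)"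
    using FM by (simp add: F_def)
  also have "\<dots> = - (if even r then 1 else -1) * sin (t/2)"
    by (simp add: sin_diff)
  also have "F 0 = - sin (t/2)" by (simp add: F_def)
  finally have "2 * sin (t/2) * (\<Sum>l<Mn. cos (real l * t)) = (if even r then 0 else 2 * sin (t/2))"
    by auto
  then have "(\<Sum>l<Mn. cos (real l * t)) = (if even r then 0 else 1)"
    using s0 by (auto split: if_splits)
  then show ?thesis using False by (simp only: targ) simp
qed

lemma cos_sum1:
  fixes Mn :: nat and r :: int
  assumes M: "Mn > 0" and r: "\<bar>r\<bar> < 2 * int Mn"
  shows "(\<Sum>l\<in>{1..<Mn}. cos (real_of_int r * (pi * real l / real Mn))) =
           (if r = 0 then real Mn - 1 else if even r then -1 else 0)"
proof -
  have "{..<Mn} = insert 0 {1..<Mn}" using M by auto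
  then have "(\<Sum>l<Mn. cos (real_of_int r * (pi * real l / real Mn))) =
      1 + (\<Sum>l\<in>{1..<Mn}. cos (real_of_int r * (pi * real l / real Mn)))"
    by (simp add: sum.insert)
  then show ?thesis using cos_sum0[OF M r] by (auto split: if_splits)
qed

lemma sin_sin_prod: "sin (A::real) * sin B = (cos (A - B) - cos (A + B)) / 2"
  by (simp add: cos_diff cos_add)

lemma sin_sin_lap: "sin (A::real) * sin B * (2 - 2 * cos t) =
   cos (A - B) - cos (A + B) - (cos (A - B + t) + cos (A - B - t)) / 2 + (cos (A + B + t) + cos (A + B - t)) / 2"
  by (simp add: cos_diff cos_add sin_add sin_diff field_simps)

lemma sin_orth:
  fixes Mn p q :: nat
  assumes M: "Mn > 0" and p: "p \<in> {1..<Mn}" and q: "q \<in> {1..<Mn}"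
  shows "(\<Sum>l\<in>{1..<Mn}. sin (real p * (pi * real l / real Mn)) * sin (real q * (pi * real l / real Mn)))
         = (if p = q then real Mn / 2 else 0)"
proof -
  let ?S = "\<lambda>r::int. (\<Sum>l\<in>{1..<Mn}. cos (real_of_int r * (pi * real l / real Mn)))"
  have pt: "sin (real p * x) * sin (real q * x) =
      (cos (real_of_int (int p - int q) * x) - cos (real_of_int (int p + int q) * x)) / 2" for x
    by (subst sin_sin_prod) (simp add: algebra_simps)
  have "(\<Sum>l\<in>{1..<Mn}. sin (real p * (pi * real l / real Mn)) * sin (real q * (pi * real l / real Mn)))
      = (?S (int p - int q) - ?S (int p + int q)) / 2"
    by (simp only: pt) (simp add: sum_subtractf flip: sum_divide_distrib)
  also have "\<dots> = (if p = q then real Mn / 2 else 0)"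
  proof -
    have S: "\<And>r. \<bar>r\<bar> < 2*int Mn \<Longrightarrow> ?S r = (if r = 0 then real Mn - 1 else if even r then -1 else 0)"
      using cos_sum1[OF M] by blast
    have b: "\<bar>int p - int q\<bar> < 2*int Mn" "\<bar>int p + int q\<bar> < 2*int Mn" using p q by auto
    show ?thesis unfolding S[OF b(1)] S[OF b(2)] using p q by auto
  qed
  finally show ?thesis .
qed

lemma sin_lap:
  fixes Mn p q :: nat
  assumes M: "Mn > 0" and p: "p \<in> {1..<Mn}" and q: "q \<in> {1..<Mn}"
  shows "(\<Sum>l\<in>{1..<Mn}. sin (real p * (pi * real l / real Mn)) * sin (real q * (pi * real l / real Mn))
            * (2 - 2 * cos (pi * real l / real Mn)))
         = real Mn / 2 * (if p = q then 2 else if \<bar>int p - int q\<bar> = 1 then -1 else 0)"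
proof -
  let ?S = "\<lambda>r::int. (\<Sum>l\<in>{1..<Mn}. cos (real_of_int r * (pi * real l / real Mn)))"
  have pt: "sin (real p * x) * sin (real q * x) * (2 - 2 * cos x) =
      cos (real_of_int (int p - int q) * x) - cos (real_of_int (int p + int q) * x)
      - (cos (real_of_int (int p - int q + 1) * x) + cos (real_of_int (int p - int q - 1) * x)) / 2
      + (cos (real_of_int (int p + int q + 1) * x) + cos (real_of_int (int p + int q - 1) * x)) / 2" for x
    by (subst sin_sin_lap) (simp add: algebra_simps)
  have "(\<Sum>l\<in>{1..<Mn}. sin (real p * (pi * real l / real Mn)) * sin (real q * (pi * real l / real Mn))
            * (2 - 2 * cos (pi * real l / real Mn)))
      = ?S (int p - int q) - ?S (int p + int q) - (?S (int p - int q + 1) + ?S (int p - int q - 1)) / 2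
        + (?S (int p + int q + 1) + ?S (int p + int q - 1)) / 2"
    by (simp only: pt) (simp add: sum_subtractf sum.distrib flip: sum_divide_distrib)
  also have "\<dots> = real Mn / 2 * (if p = q then 2 else if \<bar>int p - int q\<bar> = 1 then -1 else 0)"
  proof -
    have S: "\<And>r. \<bar>r\<bar> < 2*int Mn \<Longrightarrow> ?S r = (if r = 0 then real Mn - 1 else if even r then -1 else 0)"
      using cos_sum1[OF M] by blast
    have b: "\<bar>int p - int q\<bar> < 2*int Mn" "\<bar>int p + int q\<bar> < 2*int Mn"
      "\<bar>int p - int q + 1\<bar> < 2*int Mn" "\<bar>int p - int q - 1\<bar> < 2*int Mn"
      "\<bar>int p + int q + 1\<bar> < 2*int Mn" "\<bar>int p + int q - 1\<bar> < 2*int Mn" using p q by auto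
    show ?thesis unfolding S[OF b(1)] S[OF b(2)] S[OF b(3)] S[OF b(4)] S[OF b(5)] S[OF b(6)]
      using p q by (auto simp: even_add even_diff field_simps) presburger+
  qed
  finally show ?thesis .
qed

definition Mm :: "nat \<Rightarrow> nat" where "Mm m = 2 * m + 2"

definition uu :: "nat \<Rightarrow> int \<Rightarrow> int \<Rightarrow> real" where
  "uu m x l = sqrt (2 / real (Mm m)) * sin (real_of_int (x + int m + 1) * (pi * real_of_int (l + int m + 1) / real (Mm m)))"

definition dd :: "nat \<Rightarrow> int \<Rightarrow> real" where
  "dd m l = 2 - 2 * cos (pi * real_of_int (l + int m + 1) / real (Mm m))"

lemma uu_sym: "uu m x l = uu m l x"
  by (simp add: uu_def mult_ac)

lemma sqrt_sqrt_mult: "sqrt (2 / real (Mm m)) * (sqrt (2 / real (Mm m)) * X) = 2 / real (Mm m) * X"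
  by (simp add: mult.assoc[symmetric])

lemma sum_shift:
  "(\<Sum>l\<in>{-int m..int m}. F (l + int m + 1)) = (\<Sum>l\<in>{1..<Mm m}. F (int l))"
  by (rule sum.reindex_bij_witness[of _ "\<lambda>l. int l - int m - 1" "\<lambda>l. nat (l + int m + 1)"])
     (auto simp: Mm_def)

lemma site_nat:
  assumes "x \<in> {-int m..int m}"
  shows "real_of_int (x + int m + 1) = real (nat (x + int m + 1))" "nat (x + int m + 1) \<in> {1..<Mm m}"
  using assms by (auto simp: Mm_def)

lemma uu_orth:
  assumes i: "i \<in> {-int m..int m}" and j: "j \<in> {-int m..int m}"
  shows "(\<Sum>l\<in>{-int m..int m}. uu m l i * uu m l j) = (if i = j then 1 else 0)"
proof -
  define p where "p = nat (i + int m + 1)"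
  define q where "q = nat (j + int m + 1)"
  note pq = site_nat(1)[OF i, folded p_def] site_nat(1)[OF j, folded q_def]
      site_nat(2)[OF i, folded p_def] site_nat(2)[OF j, folded q_def]
  have M: "Mm m > 0" by (simp add: Mm_def)
  have "(\<Sum>l\<in>{-int m..int m}. uu m l i * uu m l j) =
     (\<Sum>l\<in>{-int m..int m}. (\<lambda>t. 2 / real (Mm m) * (sin (real p * (pi * real_of_int t / real (Mm m))) *
          sin (real q * (pi * real_of_int t / real (Mm m))))) (l + int m + 1))"
    unfolding uu_def pq(1,2) by (intro sum.cong refl) (simp add: mult_ac sqrt_sqrt_mult)
  also have "\<dots> = (\<Sum>l\<in>{1..<Mm m}. 2 / real (Mm m) * (sin (real p * (pi * real l / real (Mm m))) *
          sin (real q * (pi * real l / real (Mm m)))))"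
    by (subst sum_shift) simp
  also have "\<dots> = 2 / real (Mm m) * (if p = q then real (Mm m) / 2 else 0)"
    unfolding sum_distrib_left[symmetric] sin_orth[OF M pq(3,4)] by (rule refl)
  also have "\<dots> = (if i = j then 1 else 0)"
    using M i j by (auto simp: p_def q_def)
  finally show ?thesis .
qed

lemma uu_dec:
  assumes i: "i \<in> {-int m..int m}" and j: "j \<in> {-int m..int m}"
  shows "hbar i j = (\<Sum>l\<in>{-int m..int m}. uu m i l * dd m l * uu m j l)"
proof -
  define p where "p = nat (i + int m + 1)"
  define q where "q = nat (j + int m + 1)"
  note pq = site_nat(1)[OF i, folded p_def] site_nat(1)[OF j, folded q_def]
      site_nat(2)[OF i, folded p_def] site_nat(2)[OF j, folded q_def]
  have M: "Mm m > 0" by (simp add: Mm_def)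
  have "(\<Sum>l\<in>{-int m..int m}. uu m i l * dd m l * uu m j l) =
     (\<Sum>l\<in>{-int m..int m}. (\<lambda>t. 2 / real (Mm m) * (sin (real p * (pi * real_of_int t / real (Mm m))) *
          sin (real q * (pi * real_of_int t / real (Mm m))) * (2 - 2 * cos (pi * real_of_int t / real (Mm m))))) (l + int m + 1))"
    unfolding uu_def dd_def pq(1,2) by (intro sum.cong refl) (simp add: mult_ac sqrt_sqrt_mult)
  also have "\<dots> = (\<Sum>l\<in>{1..<Mm m}. 2 / real (Mm m) * (sin (real p * (pi * real l / real (Mm m))) *
          sin (real q * (pi * real l / real (Mm m))) * (2 - 2 * cos (pi * real l / real (Mm m)))))"
    by (subst sum_shift) simp
  also have "\<dots> = 2 / real (Mm m) * (real (Mm m) / 2 * (if p = q then 2 else if \<bar>int p - int q\<bar> = 1 then -1 else 0))"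
    unfolding sum_distrib_left[symmetric] sin_lap[OF M pq(3,4)] by (rule refl)
  also have "\<dots> = hbar i j"
    using M i j by (auto simp: p_def q_def hbar_def)
  finally show ?thesis by simp
qed

lemma dd_pos:
  assumes "l \<in> {-int m..int m}"
  shows "dd m l > 0"
proof -
  define t where "t = pi * real_of_int (l + int m + 1) / real (Mm m)"
  have "0 < t"
    using assms by (auto simp: Mm_def t_def)
  moreover have "real_of_int (l + int m + 1) / real (Mm m) < 1"
    using assms by (auto simp: Mm_def field_simps)
  then have "t < pi" unfolding t_def using pi_gt_zero
    by (metis mult.right_neutral mult_strict_left_mono times_divide_eq_right)
  ultimately have "cos t < cos 0"
    by (intro cos_monotone_0_pi) auto
  then show ?thesis by (simp add: dd_def t_def)
qed

lemma hbar_rpow: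
  assumes i: "i \<in> {-int m..int m}" and j: "j \<in> {-int m..int m}"
  shows "mat_rpow {-int m..int m} hbar a i j = (\<Sum>l\<in>{-int m..int m}. uu m i l * dd m l powr a * uu m j l)"
proof -
  have "mat_rpow {-int m..int m} hbar a = (\<lambda>i j. if i \<in> {-int m..int m} \<and> j \<in> {-int m..int m}
      then (\<Sum>l\<in>{-int m..int m}. uu m i l * dd m l powr a * uu m j l) else 0)"
    by (rule rpow_eval) (use uu_orth uu_dec dd_pos in auto)
  then show ?thesis using i j by simp
qed

definition gg :: "real \<Rightarrow> real \<Rightarrow> real" where
  "gg a t = 4 powr a * sin (pi * t / 2) powr (2 * a)"

lemma sin_lower: fixes x :: real assumes "0 \<le> x" "x \<le> 2" shows "x / 3 \<le> sin x"
proof -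
  have "\<bar>sin x - (\<Sum>m<3. sin_coeff m * x ^ m)\<bar> \<le> inverse (fact 3) * \<bar>x\<bar> ^ 3"
    by (rule Maclaurin_sin_bound)
  moreover have "(\<Sum>m<3. sin_coeff m * x ^ m) = x"
    by (simp add: numeral_3_eq_3 sin_coeff_def)
  ultimately have "x - x ^ 3 / 6 \<le> sin x" using assms by (simp add: fact_numeral abs_if split: if_splits)
  moreover have "x ^ 3 / 6 \<le> 2 * x / 3"
  proof -
    have "x ^ 3 = x * x^2" by (simp add: power3_eq_cube power2_eq_square)
    also have "\<dots> \<le> x * 4" using assms mult_mono[of x 2 x 2] by (intro mult_left_mono) (auto simp: power2_eq_square)
    finally show ?thesis by simp
  qed
  ultimately show ?thesis by simp
qed

lemma sin_half_lower: assumes "0 \<le> t" "t \<le> 1" shows "t / 3 \<le> sin (pi * t / 2)"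
proof -
  have "pi * t \<le> pi" using assms by (simp add: mult_left_le)
  then have "pi * t / 2 \<le> 2" using pi_half_less_two by linarith
  then have "pi * t / 2 / 3 \<le> sin (pi * t / 2)"
    using assms by (intro sin_lower) auto
  moreover have "t \<le> pi * t / 2"
  proof -
    have "t * 1 \<le> t * (pi / 2)" using assms pi_ge_two by (intro mult_left_mono) auto
    then show ?thesis by (simp add: mult.commute)
  qed
  ultimately show ?thesis by linarith
qed

lemma sin_half_pos: assumes "0 < t" "t \<le> 1" shows "0 < sin (pi * t / 2)"
  using sin_half_lower[of t] assms by auto

lemma sin_half_mono: assumes "0 \<le> u" "u \<le> v" "v \<le> 1" shows "sin (pi * u / 2) \<le> sin (pi * v / 2)"
proof -
  have "0 \<le> pi * u" "pi * u \<le> pi * v" "pi * v \<le> pi" using assms by (auto simp: mult_left_le intro: mult_left_mono)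
  then show ?thesis using pi_gt_zero by (intro sin_monotone_2pi_le; linarith)
qed

lemma gg_nonneg: "0 \<le> gg a t"
  by (simp add: gg_def)

lemma gg_one: "gg a 1 = 4 powr a"
  by (simp add: gg_def)

lemma gg_mono_pos: assumes "0 \<le> a" "0 \<le> u" "u \<le> v" "v \<le> 1" shows "gg a u \<le> gg a v"
proof (cases "u = 0")
  case True then show ?thesis by (simp add: gg_def)
next
  case False
  have "sin (pi * u / 2) powr (2 * a) \<le> sin (pi * v / 2) powr (2 * a)"
    using assms False sin_half_pos[of u] by (intro powr_mono2 sin_half_mono) auto
  then show ?thesis by (simp add: gg_def)
qed

lemma gg_mono_neg: assumes "a < 0" "0 < u" "u \<le> v" "v \<le> 1" shows "gg a v \<le> gg a u"
proof -
  have "sin (pi * v / 2) powr (2 * a) \<le> sin (pi * u / 2) powr (2 * a)"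
    using assms by (intro powr_mono2' sin_half_mono sin_half_pos) auto
  then show ?thesis by (simp add: gg_def)
qed

lemma gg_le_pos: assumes "0 \<le> a" "0 \<le> t" "t \<le> 1" shows "gg a t \<le> 4 powr a"
  using gg_mono_pos[OF assms(1,2,3) order_refl] gg_one[of a] by simp

lemma gg_le_neg: assumes "a < 0" "0 < t" "t \<le> 1" shows "gg a t \<le> 4 powr a * 3 powr (- (2 * a)) * t powr (2 * a)"
proof -
  have "sin (pi * t / 2) powr (2 * a) \<le> (t / 3) powr (2 * a)"
    using assms by (intro powr_mono2' sin_half_lower) auto
  also have "\<dots> = t powr (2 * a) / 3 powr (2 * a)"
    using assms by (simp add: powr_divide)
  also have "\<dots> = 3 powr (- (2 * a)) * t powr (2 * a)"
    by (simp only: powr_minus divide_inverse mult.commute)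
  finally show ?thesis unfolding gg_def by (simp add: mult.assoc)
qed

lemma meas_F: "(\<lambda>t. sin (pi * t / 2) powr (2 * a) * cos (w * t)) \<in> borel_measurable borel"
  by measurable

lemma meas_F_on: "(\<lambda>t. sin (pi * t / 2) powr (2 * a) * cos (w * t)) \<in> borel_measurable (lebesgue_on S)"
  using measurable_comp[OF id_borel_measurable_lebesgue_on meas_F] by (simp add: comp_def)

definition b0 :: "real \<Rightarrow> real \<Rightarrow> real" where
  "b0 a t = (if 0 \<le> a then 1 else 3 powr (- (2 * a)) * t powr (2 * a))"

lemma b0_has_int:
  assumes a: "a > -1/2" and b: "0 \<le> B"
  shows "(b0 a has_integral (if 0 \<le> a then B else 3 powr (- (2 * a)) * (B powr (2 * a + 1) / (2 * a + 1)))) {0..B}"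
proof (cases "0 \<le> a")
  case True
  have "((\<lambda>t. 1::real) has_integral B) {0..B}"
    using has_integral_const_real[of "1::real" 0 B] b by simp
  moreover have "b0 a = (\<lambda>t. 1)" using True by (simp add: b0_def fun_eq_iff)
  ultimately show ?thesis using True by simp
next
  case False
  have "((\<lambda>t. t powr (2 * a)) has_integral (B powr (2 * a + 1) / (2 * a + 1))) {0..B}"
    using has_integral_powr_from_0[of "2 * a" B] a b by simp
  then have "((\<lambda>t. 3 powr (- (2 * a)) * t powr (2 * a)) has_integral 3 powr (- (2 * a)) * (B powr (2 * a + 1) / (2 * a + 1))) {0..B}"
    by (rule has_integral_mult_right)
  moreover have "b0 a = (\<lambda>t. 3 powr (- (2 * a)) * t powr (2 * a))" using False by (simp add: b0_def fun_eq_iff)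
  ultimately show ?thesis using False by simp
qed

lemma b0_int: "a > -1/2 \<Longrightarrow> 0 \<le> B \<Longrightarrow> b0 a integrable_on {0..B}"
  using b0_has_int unfolding integrable_on_def by blast

lemma sinp_le_b0:
  assumes "0 \<le> t" "t \<le> 1"
  shows "sin (pi * t / 2) powr (2 * a) \<le> b0 a t"
proof (cases "0 \<le> a")
  case True
  have "sin (pi * t / 2) powr (2 * a) \<le> 1"
  proof (cases "sin (pi * t / 2) = 0")
    case False
    have "0 \<le> sin (pi * t / 2)" using sin_half_lower[OF assms] assms by linarith
    moreover have "sin (pi * t / 2) \<le> 1" by simp
    ultimately show ?thesis using True by (intro powr_le1) auto
  qed simp
  then show ?thesis using True by (simp add: b0_def)
next
  case False
  show ?thesis
  proof (cases "t = 0")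
    case True then show ?thesis by (simp add: b0_def)
  next
    case t0: False
    have "sin (pi * t / 2) powr (2 * a) \<le> (t / 3) powr (2 * a)"
      using assms False t0 by (intro powr_mono2' sin_half_lower) auto
    also have "\<dots> = t powr (2 * a) / 3 powr (2 * a)"
      using assms by (simp add: powr_divide)
    also have "\<dots> = 3 powr (- (2 * a)) * t powr (2 * a)"
      by (simp only: powr_minus divide_inverse mult.commute)
    finally show ?thesis using False by (simp add: b0_def)
  qed
qed

lemma F_absint:
  assumes a: "a > -1/2" and B: "0 \<le> B" "B \<le> 1"
  shows "(\<lambda>t. sin (pi * t / 2) powr (2 * a) * cos (w * t)) absolutely_integrable_on {0..B}"
proof (rule measurable_bounded_by_integrable_imp_absolutely_integrable)
  show "(\<lambda>t. sin (pi * t / 2) powr (2 * a) * cos (w * t)) \<in> borel_measurable (lebesgue_on {0..B})"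
    by (rule meas_F_on)
  show "{0..B} \<in> sets lebesgue" by simp
  show "b0 a integrable_on {0..B}" using b0_int a B by simp
  fix t assume t: "t \<in> {0..B}"
  have "norm (sin (pi * t / 2) powr (2 * a) * cos (w * t)) \<le> sin (pi * t / 2) powr (2 * a) * 1"
    unfolding norm_mult by (intro mult_mono) auto
  also have "\<dots> \<le> b0 a t" using sinp_le_b0[of t a] t B by simp
  finally show "norm (sin (pi * t / 2) powr (2 * a) * cos (w * t)) \<le> b0 a t" .
qed

lemma F_int:
  assumes a: "a > -1/2" and "0 \<le> B" "B \<le> 1"
  shows "(\<lambda>t. sin (pi * t / 2) powr (2 * a) * cos (w * t)) integrable_on {0..B}"
  using set_lebesgue_integral_eq_integral(1)[OF F_absint[OF assms]] .

lemma F_set_int_lborel: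
  assumes a: "a > -1/2"
  shows "set_integrable lborel {0..1} (\<lambda>t. sin (pi * t / 2) powr (2 * a) * cos (w * t))"
proof -
  have "set_integrable lebesgue {0..1} (\<lambda>t. sin (pi * t / 2) powr (2 * a) * cos (w * t))"
    using F_absint[OF a, of 1 w] by simp
  then show ?thesis unfolding set_integrable_def
    by (subst (asm) integrable_completion) measurable
qed

lemma hZ_integral:
  assumes a: "a > -1/2"
  shows "hZ a j k = integral {0..1} (\<lambda>t. gg a t * cos (real_of_int \<bar>j - k\<bar> * pi * t))"
proof -
  have L0: "(LBINT x=ereal 0..ereal 1. sin (pi * x / 2) powr (2 * a) * cos (w * x))
     = integral {0..1} (\<lambda>x. sin (pi * x / 2) powr (2 * a) * cos (w * x))" for w
    by (rule interval_integral_eq_integral[OF _ F_set_int_lborel[OF a]]) simp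
  have L: "(LBINT x=0..1. sin (pi * x / 2) powr (2 * a) * cos (w * x))
     = integral {0..1} (\<lambda>x. sin (pi * x / 2) powr (2 * a) * cos (w * x))" for w
    using L0[of w] by (simp add: zero_ereal_def one_ereal_def)
  have I: "(\<lambda>x. sin (pi * x / 2) powr (2 * a) * cos (w * x)) integrable_on {0..1}" for w
    using F_int[OF a, of 1 w] by simp
  show ?thesis
    unfolding hZ_def L integral_mult[OF I] by (simp add: gg_def mult.assoc)
qed

lemma cell_split:
  fixes f :: "real \<Rightarrow> real" and M :: nat
  assumes M: "M > 0" and f: "f integrable_on {0..1}"
  shows "j \<le> M \<Longrightarrow> integral {0..real j / M} f = (\<Sum>l<j. integral {real l / M..real (Suc l) / M} f)"
proof (induction j)
  case 0 then show ?case by simp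
next
  case (Suc j)
  have sub: "{0..real (Suc j) / M} \<subseteq> {0..1}" using Suc.prems M by (auto simp: field_simps)
  have fi: "f integrable_on {0..real (Suc j) / M}" by (rule integrable_on_subinterval[OF f sub])
  have "integral {0..real (Suc j) / M} f = integral {0..real j / M} f + integral {real j / M..real (Suc j) / M} f"
    using Henstock_Kurzweil_Integration.integral_combine[of 0 "real j / M" "real (Suc j) / M" f] fi M
    by (simp add: divide_right_mono)
  then show ?case using Suc by simp
qed

lemma cell_split_all:
  fixes f :: "real \<Rightarrow> real" and M :: nat
  assumes M: "M > 0" and f: "f integrable_on {0..1}"
  shows "integral {0..1} f = (\<Sum>l<M. integral {real l / M..real (Suc l) / M} f)"
  using cell_split[OF M f order_refl] M by simp

lemma cos_lip: "\<bar>cos x - cos y\<bar> \<le> \<bar>x - y\<bar>" for x y :: real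
proof -
  have "\<bar>cos x - cos y\<bar> = 2 * \<bar>sin ((x + y) / 2)\<bar> * \<bar>sin ((y - x) / 2)\<bar>"
    by (simp add: cos_diff_cos abs_mult)
  also have "\<dots> \<le> 2 * 1 * \<bar>(y - x) / 2\<bar>"
    by (intro mult_mono abs_sin_x_le_abs_x) auto
  finally show ?thesis by simp
qed

lemma cell_bound:
  fixes f :: "real \<Rightarrow> real"
  assumes uv: "u \<le> v" and f: "f integrable_on {u..v}"
    and B: "\<And>t. t \<in> {u..v} \<Longrightarrow> \<bar>f t - c\<bar> \<le> B"
  shows "\<bar>integral {u..v} f - (v - u) * c\<bar> \<le> (v - u) * B"
proof -
  have "integral {u..v} (\<lambda>t. f t - c) = integral {u..v} f - (v - u) * c"
    using integral_diff[OF f integrable_const_ivl[of c u v]] uv by (simp add: content_real)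
  moreover have "norm (integral {u..v} (\<lambda>t. f t - c)) \<le> integral {u..v} (\<lambda>t. B)"
    by (rule integral_norm_bound_integral) (use f B in \<open>auto intro: integrable_diff\<close>)
  ultimately show ?thesis using uv by (simp add: content_real mult.commute)
qed

definition bet :: "real \<Rightarrow> real" where "bet a = max 0 (- (2 * a))"

lemma Gb:
  assumes a: "a > -1/2" and M: "M > 0" and l: "1 \<le> l" "l \<le> M"
  shows "gg a (real l / real M) \<le> 4 powr a * 3 powr bet a * real M powr bet a"
proof (cases "0 \<le> a")
  case True
  have "gg a (real l / real M) \<le> 4 powr a" using True l M by (intro gg_le_pos) auto
  then show ?thesis using True M by (simp add: bet_def)
next
  case False
  have "gg a (real l / real M) \<le> gg a (1 / real M)"
    using False l M by (intro gg_mono_neg) (auto simp: field_simps)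
  also have "\<dots> \<le> 4 powr a * 3 powr (- (2 * a)) * (1 / real M) powr (2 * a)"
    using False M by (intro gg_le_neg) auto
  also have "(1 / real M) powr (2 * a) = real M powr (- (2 * a))"
    using M by (simp add: powr_divide powr_minus_divide)
  finally show ?thesis using False by (simp add: bet_def)
qed

lemma Gvar:
  assumes a: "a > -1/2" and M: "M > 0"
  shows "(\<Sum>l\<in>{1..<M}. \<bar>gg a (real l / real M) - gg a (real (Suc l) / real M)\<bar>)
           \<le> 4 powr a * 3 powr bet a * real M powr bet a + 4 powr a"
proof -
  define f where "f i = gg a (real i / real M)" for i
  have Gb1: "f 1 \<le> 4 powr a * 3 powr bet a * real M powr bet a"
    using Gb[OF a M, of 1] M by (simp add: f_def)
  have fM: "f M = 4 powr a" using M by (simp add: f_def gg_one)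
  have f0: "0 \<le> f i" for i by (simp add: f_def gg_nonneg)
  show ?thesis
  proof (cases "0 \<le> a")
    case True
    have "(\<Sum>l\<in>{1..<M}. \<bar>f l - f (Suc l)\<bar>) = (\<Sum>l\<in>{1..<M}. f (Suc l) - f l)"
    proof (intro sum.cong refl)
      fix l assume l: "l \<in> {1..<M}"
      have "f l \<le> f (Suc l)" unfolding f_def using True l M by (intro gg_mono_pos) (auto simp: field_simps)
      then show "\<bar>f l - f (Suc l)\<bar> = f (Suc l) - f l" by simp
    qed
    also have "\<dots> = f M - f 1" using M by (intro sum_Suc_diff') auto
    finally have S: "(\<Sum>l\<in>{1..<M}. \<bar>f l - f (Suc l)\<bar>) = f M - f 1" .
    have "0 \<le> (4::real) powr a" by simp
    then show ?thesis using S fM f0[of 1] Gb1 unfolding f_def by linarith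
  next
    case False
    have "(\<Sum>l\<in>{1..<M}. \<bar>f l - f (Suc l)\<bar>) = - (\<Sum>l\<in>{1..<M}. f (Suc l) - f l)"
    proof -
      have "(\<Sum>l\<in>{1..<M}. \<bar>f l - f (Suc l)\<bar>) = (\<Sum>l\<in>{1..<M}. - (f (Suc l) - f l))"
      proof (intro sum.cong refl)
        fix l assume l: "l \<in> {1..<M}"
        have "f (Suc l) \<le> f l" unfolding f_def using False l M by (intro gg_mono_neg) (auto simp: field_simps)
        then show "\<bar>f l - f (Suc l)\<bar> = - (f (Suc l) - f l)" by simp
      qed
      then show ?thesis by (simp add: sum_negf[symmetric])
    qed
    also have "(\<Sum>l\<in>{1..<M}. f (Suc l) - f l) = f M - f 1" using M by (intro sum_Suc_diff') auto
    finally have S: "(\<Sum>l\<in>{1..<M}. \<bar>f l - f (Suc l)\<bar>) = - (f M - f 1)" .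
    have "0 \<le> (4::real) powr a" by simp
    then show ?thesis using S fM f0[of M] Gb1 unfolding f_def by linarith
  qed
qed

lemma powsum:
  fixes c :: real and M :: nat
  assumes c: "-1 < c" "c < 0" and M: "M > 0"
  shows "(\<Sum>l\<in>{1..M}. (real l / real M) powr c) \<le> real M / (c + 1)"
proof -
  define f where "f t = t powr c" for t :: real
  have fint: "f integrable_on {0..1}"
    using has_integral_powr_from_0[of c 1] c unfolding f_def integrable_on_def by auto
  have fI: "integral {0..1} f = 1 / (c + 1)"
    using has_integral_powr_from_0[of c 1] c unfolding f_def by (simp add: integral_unique)
  have cell: "(1 / real M) * f (real (Suc l) / real M) \<le> integral {real l / M..real (Suc l) / M} f" if l: "l < M" for l
  proof (cases "l = 0")
    case True
    have "((\<lambda>t. t powr c) has_integral ((1 / real M) powr (c + 1) / (c + 1))) {0..1 / real M}"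
      using has_integral_powr_from_0[of c "1 / real M"] c M by simp
    then have I: "integral {0..1 / real M} f = (1 / real M) powr (c + 1) / (c + 1)"
      unfolding f_def by (simp add: integral_unique)
    have "(1 / real M) * f (1 / real M) = (1 / real M) powr (c + 1)"
      using M by (simp add: f_def powr_add)
    also have "\<dots> \<le> (1 / real M) powr (c + 1) / (c + 1)"
      using c by (simp add: le_divide_eq mult_left_le)
    finally show ?thesis using True I by simp
  next
    case False
    have sub: "{real l / M..real (Suc l) / M} \<subseteq> {0..1}" using l M by (auto simp: field_simps)
    have "integral {real l / M..real (Suc l) / M} (\<lambda>t. f (real (Suc l) / real M)) \<le> integral {real l / M..real (Suc l) / M} f"
    proof (rule integral_le)
      show "f integrable_on {real l / M..real (Suc l) / M}" by (rule integrable_on_subinterval[OF fint sub])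
      fix t assume t: "t \<in> {real l / M..real (Suc l) / M}"
      have "0 < real l / M" using False M by simp
      then have "0 < t" using t by simp
      then show "f (real (Suc l) / real M) \<le> f t" using t c unfolding f_def by (intro powr_mono2') auto
    qed (rule integrable_const_ivl)
    then show ?thesis using M by (simp add: content_real field_simps)
  qed
  have "(\<Sum>l\<in>{1..M}. (real l / real M) powr c) = real M * (\<Sum>l<M. (1 / real M) * f (real (Suc l) / real M))"
    using M by (simp add: sum.atLeast1_atMost_eq f_def sum_distrib_left)
  also have "\<dots> \<le> real M * (\<Sum>l<M. integral {real l / M..real (Suc l) / M} f)"
    by (intro mult_left_mono sum_mono cell) auto
  also have "\<dots> = real M * integral {0..1} f"
    using cell_split_all[OF M fint] by simp
  also have "\<dots> = real M / (c + 1)"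
    using fI by simp
  finally show ?thesis .
qed

definition Ks :: "real \<Rightarrow> real" where
  "Ks a = (if 0 \<le> a then 4 powr a else 4 powr a * 3 powr (- (2 * a)) / (2 * a + 1))"

lemma Gsum:
  assumes a: "a > -1/2" and M: "M > 0"
  shows "(\<Sum>l\<in>{1..M}. gg a (real l / real M)) \<le> Ks a * real M"
proof (cases "0 \<le> a")
  case True
  have "(\<Sum>l\<in>{1..M}. gg a (real l / real M)) \<le> (\<Sum>l\<in>{1..M}. 4 powr a)"
    using True M by (intro sum_mono gg_le_pos) auto
  then show ?thesis using True by (simp add: Ks_def mult.commute)
next
  case False
  have "(\<Sum>l\<in>{1..M}. gg a (real l / real M)) \<le> (\<Sum>l\<in>{1..M}. 4 powr a * 3 powr (- (2 * a)) * (real l / real M) powr (2 * a))"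
    using False M by (intro sum_mono gg_le_neg) auto
  also have "\<dots> = 4 powr a * 3 powr (- (2 * a)) * (\<Sum>l\<in>{1..M}. (real l / real M) powr (2 * a))"
    by (simp add: sum_distrib_left)
  also have "\<dots> \<le> 4 powr a * 3 powr (- (2 * a)) * (real M / (2 * a + 1))"
    using False a M by (intro mult_left_mono powsum) auto
  finally show ?thesis using False by (simp add: Ks_def)
qed

lemma Gdiff:
  assumes a: "a > -1/2" and uv: "0 < u" "u \<le> t" "t \<le> v" "v \<le> 1"
  shows "\<bar>gg a t * cos (w * t) - gg a v * cos (w * v)\<bar> \<le> \<bar>gg a u - gg a v\<bar> + gg a v * \<bar>w\<bar> * (v - t)"
proof -
  have m: "\<bar>gg a t - gg a v\<bar> \<le> \<bar>gg a u - gg a v\<bar>"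
  proof (cases "0 \<le> a")
    case True
    then show ?thesis using uv gg_mono_pos[of a u t] gg_mono_pos[of a t v] by auto
  next
    case False
    then show ?thesis using uv gg_mono_neg[of a u t] gg_mono_neg[of a t v] by auto
  qed
  have "gg a t * cos (w * t) - gg a v * cos (w * v) = (gg a t - gg a v) * cos (w * t) + gg a v * (cos (w * t) - cos (w * v))"
    by (simp add: algebra_simps)
  also have "\<bar>\<dots>\<bar> \<le> \<bar>gg a t - gg a v\<bar> * 1 + gg a v * (\<bar>w\<bar> * (v - t))"
  proof -
    have "\<bar>cos (w * t) - cos (w * v)\<bar> \<le> \<bar>w * t - w * v\<bar>" by (rule cos_lip)
    also have "\<dots> = \<bar>w\<bar> * (v - t)" using uv by (simp add: abs_mult_pos' right_diff_distrib[symmetric] abs_mult)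
    finally have c: "\<bar>cos (w * t) - cos (w * v)\<bar> \<le> \<bar>w\<bar> * (v - t)" .
    have c1: "\<bar>gg a t - gg a v\<bar> * \<bar>cos (w * t)\<bar> \<le> \<bar>gg a t - gg a v\<bar> * 1"
      by (intro mult_left_mono) auto
    have c2: "gg a v * \<bar>cos (w * t) - cos (w * v)\<bar> \<le> gg a v * (\<bar>w\<bar> * (v - t))"
      by (intro mult_left_mono c gg_nonneg)
    have e1: "\<bar>(gg a t - gg a v) * cos (w * t)\<bar> = \<bar>gg a t - gg a v\<bar> * \<bar>cos (w * t)\<bar>" by (simp add: abs_mult)
    have e2: "\<bar>gg a v * (cos (w * t) - cos (w * v))\<bar> = gg a v * \<bar>cos (w * t) - cos (w * v)\<bar>" by (simp add: abs_mult gg_nonneg)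
    show ?thesis
      using abs_triangle_ineq[of "(gg a t - gg a v) * cos (w * t)" "gg a v * (cos (w * t) - cos (w * v))"] c1 c2 e1 e2
      by linarith
  qed
  finally show ?thesis using m by (simp add: mult.assoc)
qed

lemma h_int:
  assumes a: "a > -1/2" and B: "0 \<le> B" "B \<le> 1"
  shows "(\<lambda>t. gg a t * cos (w * t)) integrable_on {0..B}"
proof -
  have "(\<lambda>t. 4 powr a * (sin (pi * t / 2) powr (2 * a) * cos (w * t))) integrable_on {0..B}"
    using integrable_cmul[OF F_int[OF a B], of "4 powr a" w] by simp
  then show ?thesis by (simp add: gg_def mult.assoc)
qed

lemma h_int_sub:
  assumes a: "a > -1/2" and uv: "0 \<le> u" "v \<le> 1"
  shows "(\<lambda>t. gg a t * cos (w * t)) integrable_on {u..v}"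
proof (cases "u \<le> v")
  case True
  then show ?thesis using integrable_on_subinterval[OF h_int[OF a, of 1 w]] uv by auto
qed (auto intro: has_integral_empty simp: integrable_on_def)

lemma pow_aux:
  assumes M: "M > 0"
  shows "(1 / real M) powr (2 * a + 1) = real M powr (- (2 * a)) / real M"
  using M by (simp add: powr_divide powr_add powr_minus_divide)

lemma first_cell:
  assumes a: "a > -1/2" and M: "M > 0"
  shows "\<bar>integral {0..1 / real M} (\<lambda>t. gg a t * cos (w * t))\<bar> \<le> Ks a * real M powr bet a / real M"
proof -
  have B: "0 \<le> 1 / real M" "1 / real M \<le> 1" using M by auto
  have "norm (integral {0..1 / real M} (\<lambda>t. gg a t * cos (w * t))) \<le> integral {0..1 / real M} (\<lambda>t. 4 powr a * b0 a t)"
  proof (rule integral_norm_bound_integral)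
    show "(\<lambda>t. gg a t * cos (w * t)) integrable_on {0..1 / real M}" by (rule h_int[OF a B])
    show "(\<lambda>t. 4 powr a * b0 a t) integrable_on {0..1 / real M}"
      using integrable_cmul[OF b0_int[OF a B(1)], of "4 powr a"] by simp
    fix t assume t: "t \<in> {0..1 / real M}"
    have "norm (gg a t * cos (w * t)) \<le> gg a t * 1"
      unfolding norm_mult by (intro mult_mono) (auto simp: gg_nonneg)
    also have "\<dots> \<le> 4 powr a * b0 a t"
      using sinp_le_b0[of t a] t B by (simp add: gg_def)
    finally show "norm (gg a t * cos (w * t)) \<le> 4 powr a * b0 a t" .
  qed
  also have "\<dots> = 4 powr a * integral {0..1 / real M} (b0 a)"
    by simp
  also have "integral {0..1 / real M} (b0 a) = (if 0 \<le> a then 1 / real M else 3 powr (- (2 * a)) * ((1 / real M) powr (2 * a + 1) / (2 * a + 1)))"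
    using b0_has_int[OF a B(1)] by (simp add: integral_unique)
  finally have *: "\<bar>integral {0..1 / real M} (\<lambda>t. gg a t * cos (w * t))\<bar> \<le>
      4 powr a * (if 0 \<le> a then 1 / real M else 3 powr (- (2 * a)) * ((1 / real M) powr (2 * a + 1) / (2 * a + 1)))" by simp
  show ?thesis
  proof (cases "0 \<le> a")
    case True then show ?thesis using * M by (simp add: Ks_def bet_def)
  next
    case False
    have eq: "4 powr a * (3 powr (- (2 * a)) * ((1 / real M) powr (2 * a + 1) / (2 * a + 1))) = Ks a * real M powr bet a / real M"
      unfolding pow_aux[OF M] using False by (simp add: Ks_def bet_def field_simps)
    show ?thesis using * False eq by simp
  qed
qed

lemma mid_cell:
  assumes a: "a > -1/2" and M: "M > 0" and l: "1 \<le> l" "l < M"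
  shows "\<bar>(1 / real M) * (gg a (real (Suc l) / real M) * cos (w * (real (Suc l) / real M)))
           - integral {real l / real M..real (Suc l) / real M} (\<lambda>t. gg a t * cos (w * t))\<bar>
         \<le> (1 / real M) * (\<bar>gg a (real l / real M) - gg a (real (Suc l) / real M)\<bar> + gg a (real (Suc l) / real M) * \<bar>w\<bar> / real M)"
proof -
  let ?u = "real l / real M" and ?v = "real (Suc l) / real M"
  have uv: "0 < ?u" "?u \<le> ?v" "?v \<le> 1" using M l by (auto simp: field_simps)
  have len: "?v - ?u = 1 / real M" using M by (simp add: field_simps)
  have "\<bar>integral {?u..?v} (\<lambda>t. gg a t * cos (w * t)) - (?v - ?u) * (gg a ?v * cos (w * ?v))\<bar>
      \<le> (?v - ?u) * (\<bar>gg a ?u - gg a ?v\<bar> + gg a ?v * \<bar>w\<bar> / real M)"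
  proof (rule cell_bound)
    show "?u \<le> ?v" by (rule uv)
    show "(\<lambda>t. gg a t * cos (w * t)) integrable_on {?u..?v}" using uv by (intro h_int_sub[OF a]) auto
    fix t assume t: "t \<in> {?u..?v}"
    have "\<bar>gg a t * cos (w * t) - gg a ?v * cos (w * ?v)\<bar> \<le> \<bar>gg a ?u - gg a ?v\<bar> + gg a ?v * \<bar>w\<bar> * (?v - t)"
      using t uv by (intro Gdiff[OF a]) auto
    also have "gg a ?v * \<bar>w\<bar> * (?v - t) \<le> gg a ?v * \<bar>w\<bar> * (1 / real M)"
      using t len by (intro mult_left_mono) (auto simp: gg_nonneg)
    finally show "\<bar>gg a t * cos (w * t) - gg a ?v * cos (w * ?v)\<bar> \<le> \<bar>gg a ?u - gg a ?v\<bar> + gg a ?v * \<bar>w\<bar> / real M"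
      by simp
  qed
  then show ?thesis unfolding len by (simp add: abs_minus_commute)
qed

lemma sum_gg_shift:
  assumes a: "a > -1/2" and M: "M > 0"
  shows "(\<Sum>l\<in>{1..<M}. gg a (real (Suc l) / real M)) \<le> Ks a * real M"
proof -
  have "(\<Sum>l\<in>{1..<M}. gg a (real (Suc l) / real M)) \<le> (\<Sum>l<M. gg a (real (Suc l) / real M))"
    by (intro sum_mono2) (auto simp: gg_nonneg)
  also have "\<dots> = (\<Sum>l\<in>{1..M}. gg a (real l / real M))"
    by (simp add: sum.atLeast1_atMost_eq)
  also have "\<dots> \<le> Ks a * real M" by (rule Gsum[OF a M])
  finally show ?thesis .
qed

definition C1 :: "real \<Rightarrow> real" where
  "C1 a = 2 * 4 powr a * 3 powr bet a + 2 * Ks a + 2 * 4 powr a"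

lemma Ks_nonneg: "a > -1/2 \<Longrightarrow> 0 \<le> Ks a"
  by (simp add: Ks_def)

lemma P_ge1: "M > 0 \<Longrightarrow> 1 \<le> real M powr bet a"
  by (rule ge_one_powr_ge_zero) (auto simp: bet_def)

lemma E1:
  assumes a: "a > -1/2" and M: "M > 0"
  shows "\<bar>(1 / real M) * (\<Sum>l\<in>{1..<M}. gg a (real l / real M) * cos (w * (real l / real M)))
          - integral {0..1} (\<lambda>t. gg a t * cos (w * t))\<bar>
        \<le> C1 a * (real M powr bet a + \<bar>w\<bar>) / real M"
proof -
  define h where "h t = gg a t * cos (w * t)" for t
  define D where "D l = (1 / real M) * h (real (Suc l) / real M) - integral {real l / real M..real (Suc l) / real M} h" for l
  define P where "P = real M powr bet a"
  have hfun: "h = (\<lambda>t. gg a t * cos (w * t))" by (simp add: h_def fun_eq_iff)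
  define Cg where "Cg = 4 powr a * 3 powr bet a"
  have P1: "1 \<le> P" using P_ge1[OF M] by (simp add: P_def)
  have Ks0: "0 \<le> Ks a" by (rule Ks_nonneg[OF a])
  have Cg0: "0 \<le> Cg" by (simp add: Cg_def)
  have hint: "h integrable_on {0..1}" unfolding h_def by (rule h_int[OF a]) auto
  have I: "integral {0..1} h = (\<Sum>l<M. integral {real l / real M..real (Suc l) / real M} h)"
    by (rule cell_split_all[OF M hint])
  have ins: "{1..M} = insert M {1..<M}" using M by auto
  have S: "(\<Sum>l<M. h (real (Suc l) / real M)) = (\<Sum>l\<in>{1..<M}. h (real l / real M)) + h 1"
  proof -
    have "(\<Sum>l<M. h (real (Suc l) / real M)) = (\<Sum>l\<in>{1..M}. h (real l / real M))"
      by (simp add: sum.atLeast1_atMost_eq)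
    also have "\<dots> = h (real M / real M) + (\<Sum>l\<in>{1..<M}. h (real l / real M))"
      unfolding ins by (subst sum.insert) auto
    finally show ?thesis using M by simp
  qed
  have eq: "(1 / real M) * (\<Sum>l\<in>{1..<M}. h (real l / real M)) - integral {0..1} h
      = (\<Sum>l<M. D l) - (1 / real M) * h 1"
  proof -
    have e1: "(1 / real M) * (\<Sum>l\<in>{1..<M}. h (real l / real M)) = (1 / real M) * (\<Sum>l<M. h (real (Suc l) / real M)) - (1 / real M) * h 1"
      using S by (simp add: algebra_simps)
    have e2: "(\<Sum>l<M. D l) = (1 / real M) * (\<Sum>l<M. h (real (Suc l) / real M)) - (\<Sum>l<M. integral {real l / real M..real (Suc l) / real M} h)"
      by (simp only: D_def sum_subtractf sum_distrib_left)
    show ?thesis using e1 e2 I by linarith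
  qed
  have ins0: "{..<M} = insert 0 {1..<M}" using M by auto
  have sumD: "(\<Sum>l<M. \<bar>D l\<bar>) = \<bar>D 0\<bar> + (\<Sum>l\<in>{1..<M}. \<bar>D l\<bar>)"
    unfolding ins0 by (subst sum.insert) auto
  have D0: "\<bar>D 0\<bar> \<le> (1 / real M) * (Cg * P + Ks a * P)"
  proof -
    have "\<bar>h (1 / real M)\<bar> = gg a (1 / real M) * \<bar>cos (w * (1 / real M))\<bar>"
      unfolding h_def by (simp add: abs_mult gg_nonneg)
    also have "\<dots> \<le> gg a (1 / real M)" by (rule mult_left_le) (auto simp: gg_nonneg)
    also have "\<dots> \<le> Cg * P" using Gb[OF a M, of 1] M by (simp add: Cg_def P_def)
    finally have h1: "\<bar>h (1 / real M)\<bar> \<le> Cg * P" .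
    have i1: "\<bar>integral {0..1 / real M} h\<bar> \<le> Ks a * P / real M"
      using first_cell[OF a M, of w] unfolding P_def hfun .
    have "\<bar>D 0\<bar> \<le> (1 / real M) * \<bar>h (1 / real M)\<bar> + \<bar>integral {0..1 / real M} h\<bar>"
      using abs_triangle_ineq4[of "(1 / real M) * h (1 / real M)" "integral {0..1 / real M} h"] M
      by (simp add: D_def abs_mult)
    also have "\<dots> \<le> (1 / real M) * (Cg * P) + Ks a * P / real M"
      using h1 i1 M by (intro add_mono mult_left_mono) auto
    also have "\<dots> = (1 / real M) * (Cg * P + Ks a * P)" by (simp add: algebra_simps)
    finally show ?thesis .
  qed
  have Dl: "(\<Sum>l\<in>{1..<M}. \<bar>D l\<bar>) \<le> (1 / real M) * (Cg * P + 4 powr a + \<bar>w\<bar> * Ks a)"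
  proof -
    have "(\<Sum>l\<in>{1..<M}. \<bar>D l\<bar>) \<le> (\<Sum>l\<in>{1..<M}. (1 / real M) * (\<bar>gg a (real l / real M) - gg a (real (Suc l) / real M)\<bar>
          + gg a (real (Suc l) / real M) * \<bar>w\<bar> / real M))"
      unfolding D_def h_def using mid_cell[OF a M] by (intro sum_mono) auto
    also have "\<dots> = (1 / real M) * ((\<Sum>l\<in>{1..<M}. \<bar>gg a (real l / real M) - gg a (real (Suc l) / real M)\<bar>)
          + (\<bar>w\<bar> / real M) * (\<Sum>l\<in>{1..<M}. gg a (real (Suc l) / real M)))"
    proof -
      have "(\<Sum>l\<in>{1..<M}. gg a (real (Suc l) / real M) * \<bar>w\<bar> / real M) = (\<bar>w\<bar> / real M) * (\<Sum>l\<in>{1..<M}. gg a (real (Suc l) / real M))"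
        by (subst sum_distrib_left) (rule sum.cong, auto)
      then show ?thesis by (simp only: sum_distrib_left[symmetric] sum.distrib)
    qed
    also have "\<dots> \<le> (1 / real M) * ((Cg * P + 4 powr a) + (\<bar>w\<bar> / real M) * (Ks a * real M))"
      using Gvar[OF a M] sum_gg_shift[OF a M]
      by (intro mult_left_mono add_mono) (auto simp: Cg_def P_def)
    also have "\<dots> = (1 / real M) * (Cg * P + 4 powr a + \<bar>w\<bar> * Ks a)"
      using M by simp
    finally show ?thesis .
  qed
  have hone: "\<bar>(1 / real M) * h 1\<bar> \<le> (1 / real M) * 4 powr a"
  proof -
    have "\<bar>(1 / real M) * h 1\<bar> = (1 / real M) * (4 powr a * \<bar>cos w\<bar>)"
      unfolding h_def gg_one using M by (simp add: abs_mult)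
    also have "\<dots> \<le> (1 / real M) * 4 powr a"
      by (intro mult_left_mono mult_left_le) auto
    finally show ?thesis .
  qed
  have "\<bar>(1 / real M) * (\<Sum>l\<in>{1..<M}. h (real l / real M)) - integral {0..1} h\<bar>
      \<le> (\<Sum>l<M. \<bar>D l\<bar>) + (1 / real M) * 4 powr a"
    unfolding eq using sum_abs[of D "{..<M}"] hone by linarith
  also have "\<dots> \<le> (1 / real M) * (Cg * P + Ks a * P + Cg * P + 4 powr a + \<bar>w\<bar> * Ks a + 4 powr a)"
  proof -
    have "(1 / real M) * (Cg * P + Ks a * P + Cg * P + 4 powr a + \<bar>w\<bar> * Ks a + 4 powr a)
       = (1 / real M) * (Cg * P + Ks a * P) + (1 / real M) * (Cg * P + 4 powr a + \<bar>w\<bar> * Ks a) + (1 / real M) * 4 powr a"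
      by (simp add: algebra_simps)
    then show ?thesis using sumD D0 Dl by linarith
  qed
  also have "\<dots> \<le> (1 / real M) * (C1 a * (P + \<bar>w\<bar>))"
  proof (intro mult_left_mono)
    have C1eq: "C1 a = 2 * Cg + 2 * Ks a + 2 * 4 powr a" by (simp add: C1_def Cg_def)
    have expand: "(2 * Cg + 2 * Ks a + 2 * 4 powr a) * (P + \<bar>w\<bar>) = 2 * Cg * P + 2 * Ks a * P + 2 * 4 powr a * P + 2 * Cg * \<bar>w\<bar> + 2 * Ks a * \<bar>w\<bar> + 2 * 4 powr a * \<bar>w\<bar>"
      by (simp add: algebra_simps)
    have f1: "4 powr a \<le> 4 powr a * P" using P1 by simp
    have f2: "0 \<le> Cg * \<bar>w\<bar>" "0 \<le> 4 powr a * \<bar>w\<bar>" "0 \<le> Ks a * P" "0 \<le> Ks a * \<bar>w\<bar>" using Cg0 Ks0 P1 by auto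
    show "Cg * P + Ks a * P + Cg * P + 4 powr a + \<bar>w\<bar> * Ks a + 4 powr a \<le> C1 a * (P + \<bar>w\<bar>)"
      unfolding C1eq expand using f1 f2 by (simp only: mult.commute[of "\<bar>w\<bar>" "Ks a"])
  qed simp
  finally show ?thesis unfolding hfun P_def by (simp add: h_def)
qed

lemma V_Suc: "n \<ge> 1 \<Longrightarrow> (\<Sum>l\<in>{1..<Suc n}. \<bar>(\<phi>::nat\<Rightarrow>real) (Suc l) - \<phi> l\<bar>) = (\<Sum>l\<in>{1..<n}. \<bar>\<phi> (Suc l) - \<phi> l\<bar>) + \<bar>\<phi> (Suc n) - \<phi> n\<bar>"
  by simp

lemma V_mono: "(\<Sum>l\<in>{1..<n}. \<bar>(\<phi>::nat\<Rightarrow>real) (Suc l) - \<phi> l\<bar>) \<le> (\<Sum>l\<in>{1..<Suc n}. \<bar>\<phi> (Suc l) - \<phi> l\<bar>)"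
  by (intro sum_mono2) auto

lemma alt_even:
  fixes \<phi> :: "nat \<Rightarrow> real"
  shows "\<bar>\<Sum>l\<in>{1..2*j}. (-1) ^ l * \<phi> l\<bar> \<le> (\<Sum>l\<in>{1..<2*j}. \<bar>\<phi> (Suc l) - \<phi> l\<bar>)"
proof (induction j)
  case 0 then show ?case by simp
next
  case (Suc j)
  have S: "(\<Sum>l\<in>{1..2*Suc j}. (-1) ^ l * \<phi> l) = (\<Sum>l\<in>{1..2*j}. (-1) ^ l * \<phi> l) + (\<phi> (Suc (Suc (2*j))) - \<phi> (Suc (2*j)))"
    by simp
  have V: "(\<Sum>l\<in>{1..<2*Suc j}. \<bar>\<phi> (Suc l) - \<phi> l\<bar>) = (\<Sum>l\<in>{1..<Suc (2*j)}. \<bar>\<phi> (Suc l) - \<phi> l\<bar>) + \<bar>\<phi> (Suc (Suc (2*j))) - \<phi> (Suc (2*j))\<bar>"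
    by simp
  have "(\<Sum>l\<in>{1..<2*j}. \<bar>\<phi> (Suc l) - \<phi> l\<bar>) \<le> (\<Sum>l\<in>{1..<Suc (2*j)}. \<bar>\<phi> (Suc l) - \<phi> l\<bar>)"
    by (rule V_mono)
  then show ?case unfolding S V using Suc.IH abs_triangle_ineq[of "\<Sum>l\<in>{1..2*j}. (-1) ^ l * \<phi> l" "\<phi> (Suc (Suc (2*j))) - \<phi> (Suc (2*j))"]
    by linarith
qed

lemma alt_sum:
  fixes \<phi> :: "nat \<Rightarrow> real"
  shows "\<bar>\<Sum>l\<in>{1..n}. (-1) ^ l * \<phi> l\<bar> \<le> (\<Sum>l\<in>{1..<n}. \<bar>\<phi> (Suc l) - \<phi> l\<bar>) + \<bar>\<phi> n\<bar>"
proof (cases "even n")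
  case True
  then obtain j where j: "n = 2 * j" by blast
  show ?thesis using alt_even[of \<phi> j] j by simp
next
  case False
  then obtain j where j: "n = Suc (2 * j)" by (metis oddE Suc_eq_plus1)
  have S: "(\<Sum>l\<in>{1..n}. (-1) ^ l * \<phi> l) = (\<Sum>l\<in>{1..2*j}. (-1) ^ l * \<phi> l) - \<phi> n"
    using j by simp
  have "(\<Sum>l\<in>{1..<2*j}. \<bar>\<phi> (Suc l) - \<phi> l\<bar>) \<le> (\<Sum>l\<in>{1..<n}. \<bar>\<phi> (Suc l) - \<phi> l\<bar>)"
    unfolding j by (rule V_mono)
  then show ?thesis unfolding S using alt_even[of \<phi> j] abs_triangle_ineq4[of "\<Sum>l\<in>{1..2*j}. (-1) ^ l * \<phi> l" "\<phi> n"]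
    by linarith
qed

definition C2 :: "real \<Rightarrow> real" where
  "C2 a = 2 * 4 powr a * 3 powr bet a + 4 powr a + Ks a"

lemma E2:
  assumes a: "a > -1/2" and M: "M \<ge> 2"
  shows "\<bar>(1 / real M) * (\<Sum>l\<in>{1..<M}. (-1) ^ l * (gg a (real l / real M) * cos (w * (real l / real M))))\<bar>
        \<le> C2 a * (real M powr bet a + \<bar>w\<bar>) / real M"
proof -
  have M0: "M > 0" using M by simp
  define \<phi> where "\<phi> l = gg a (real l / real M) * cos (w * (real l / real M))" for l
  define P where "P = real M powr bet a"
  define Cg where "Cg = 4 powr a * 3 powr bet a"
  have P1: "1 \<le> P" using P_ge1[OF M0] by (simp add: P_def)
  have Ks0: "0 \<le> Ks a" by (rule Ks_nonneg[OF a])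
  have Cg0: "0 \<le> Cg" by (simp add: Cg_def)
  define n where "n = M - 1"
  have n1: "n \<ge> 1" "Suc n = M" using M by (auto simp: n_def)
  have rng: "{1..<M} = {1..n}" using M by (auto simp: n_def)
  have alt: "\<bar>\<Sum>l\<in>{1..n}. (-1) ^ l * \<phi> l\<bar> \<le> (\<Sum>l\<in>{1..<n}. \<bar>\<phi> (Suc l) - \<phi> l\<bar>) + \<bar>\<phi> n\<bar>"
    by (rule alt_sum)
  have phin: "\<bar>\<phi> n\<bar> \<le> Cg * P"
  proof -
    have "\<bar>\<phi> n\<bar> = gg a (real n / real M) * \<bar>cos (w * (real n / real M))\<bar>"
      unfolding \<phi>_def by (simp add: abs_mult gg_nonneg)
    also have "\<dots> \<le> gg a (real n / real M)" by (rule mult_left_le) (auto simp: gg_nonneg)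
    also have "\<dots> \<le> Cg * P" using Gb[OF a M0, of n] n1 by (simp add: Cg_def P_def)
    finally show ?thesis .
  qed
  have var: "(\<Sum>l\<in>{1..<n}. \<bar>\<phi> (Suc l) - \<phi> l\<bar>) \<le> Cg * P + 4 powr a + \<bar>w\<bar> * Ks a"
  proof -
    have "(\<Sum>l\<in>{1..<n}. \<bar>\<phi> (Suc l) - \<phi> l\<bar>) \<le> (\<Sum>l\<in>{1..<M}. \<bar>\<phi> (Suc l) - \<phi> l\<bar>)"
      using n1 by (intro sum_mono2) auto
    also have "\<dots> \<le> (\<Sum>l\<in>{1..<M}. \<bar>gg a (real l / real M) - gg a (real (Suc l) / real M)\<bar>
          + gg a (real (Suc l) / real M) * \<bar>w\<bar> / real M)"
    proof (intro sum_mono)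
      fix l assume l: "l \<in> {1..<M}"
      have uv: "0 < real l / real M" "real l / real M \<le> real (Suc l) / real M" "real (Suc l) / real M \<le> 1"
        using l M by (auto simp: field_simps)
      have "\<bar>\<phi> (Suc l) - \<phi> l\<bar> = \<bar>\<phi> l - \<phi> (Suc l)\<bar>" by (simp add: abs_minus_commute)
      also have "\<dots> \<le> \<bar>gg a (real l / real M) - gg a (real (Suc l) / real M)\<bar>
          + gg a (real (Suc l) / real M) * \<bar>w\<bar> * (real (Suc l) / real M - real l / real M)"
        unfolding \<phi>_def using uv by (intro Gdiff[OF a]) (auto simp: mult.commute)
      also have "real (Suc l) / real M - real l / real M = 1 / real M" using M by (simp add: field_simps)
      finally show "\<bar>\<phi> (Suc l) - \<phi> l\<bar> \<le> \<bar>gg a (real l / real M) - gg a (real (Suc l) / real M)\<bar>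
          + gg a (real (Suc l) / real M) * \<bar>w\<bar> / real M" by simp
    qed
    also have "\<dots> = (\<Sum>l\<in>{1..<M}. \<bar>gg a (real l / real M) - gg a (real (Suc l) / real M)\<bar>)
          + (\<bar>w\<bar> / real M) * (\<Sum>l\<in>{1..<M}. gg a (real (Suc l) / real M))"
    proof -
      have "(\<Sum>l\<in>{1..<M}. gg a (real (Suc l) / real M) * \<bar>w\<bar> / real M) = (\<bar>w\<bar> / real M) * (\<Sum>l\<in>{1..<M}. gg a (real (Suc l) / real M))"
        by (subst sum_distrib_left) (rule sum.cong, auto)
      then show ?thesis by (simp only: sum.distrib)
    qed
    also have "\<dots> \<le> (Cg * P + 4 powr a) + (\<bar>w\<bar> / real M) * (Ks a * real M)"
      using Gvar[OF a M0] sum_gg_shift[OF a M0]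
      by (intro add_mono mult_left_mono) (auto simp: Cg_def P_def)
    also have "\<dots> = Cg * P + 4 powr a + \<bar>w\<bar> * Ks a" using M by simp
    finally show ?thesis .
  qed
  have "\<bar>(1 / real M) * (\<Sum>l\<in>{1..<M}. (-1) ^ l * \<phi> l)\<bar> = (1 / real M) * \<bar>\<Sum>l\<in>{1..n}. (-1) ^ l * \<phi> l\<bar>"
    unfolding rng by (simp add: abs_mult)
  also have "\<dots> \<le> (1 / real M) * (C2 a * (P + \<bar>w\<bar>))"
  proof (intro mult_left_mono)
    have C2eq: "C2 a = 2 * Cg + 4 powr a + Ks a" by (simp add: C2_def Cg_def)
    have expand: "(2 * Cg + 4 powr a + Ks a) * (P + \<bar>w\<bar>) = 2 * Cg * P + 4 powr a * P + Ks a * P + 2 * Cg * \<bar>w\<bar> + 4 powr a * \<bar>w\<bar> + Ks a * \<bar>w\<bar>"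
      by (simp add: algebra_simps)
    have f1: "4 powr a \<le> 4 powr a * P" using P1 by simp
    have f2: "0 \<le> Cg * \<bar>w\<bar>" "0 \<le> 4 powr a * \<bar>w\<bar>" "0 \<le> Ks a * P" using Cg0 Ks0 P1 by auto
    show "\<bar>\<Sum>l\<in>{1..n}. (-1) ^ l * \<phi> l\<bar> \<le> C2 a * (P + \<bar>w\<bar>)"
      unfolding C2eq expand using alt phin var f1 f2 by (simp only: mult.commute[of "\<bar>w\<bar>" "Ks a"])
  qed simp
  finally show ?thesis unfolding \<phi>_def P_def by simp
qed

lemma cos_shift: "cos (z + pi * real l) = (-1) ^ l * cos z"
  by (simp add: cos_add)

lemma dd_gg:
  assumes "0 < l" "l < M"
  shows "(2 - 2 * cos (pi * real l / real M)) powr a = gg a (real l / real M)"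
proof -
  define s where "s = sin (pi * (real l / real M) / 2)"
  have s0: "0 < s" unfolding s_def using assms by (intro sin_half_pos) auto
  have "cos (pi * real l / real M) = cos (2 * (pi * (real l / real M) / 2))" by simp
  also have "\<dots> = 1 - 2 * s ^ 2" unfolding s_def by (rule cos_double_sin)
  finally have "2 - 2 * cos (pi * real l / real M) = 4 * s ^ 2" by simp
  then have "(2 - 2 * cos (pi * real l / real M)) powr a = 4 powr a * (s ^ 2) powr a"
    by (simp add: powr_mult)
  also have "(s ^ 2) powr a = s powr (2 * a)"
  proof -
    have e: "s ^ 2 = s powr 2" using s0 by simp
    show ?thesis unfolding e powr_powr by simp
  qed
  finally show ?thesis by (simp add: gg_def s_def)
qed

lemma pt_formula:
  fixes p q d s :: real and l M :: nat
  assumes l: "0 < l" "l < M" and d: "p - q = d" and sp: "p + q = s + real M"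
  shows "2 / real M * (sin (p * (pi * real l / real M)) * sin (q * (pi * real l / real M))) * (2 - 2 * cos (pi * real l / real M)) powr a
     = (1 / real M) * (gg a (real l / real M) * cos ((d * pi) * (real l / real M)))
       - (1 / real M) * ((-1) ^ l * (gg a (real l / real M) * cos ((s * pi) * (real l / real M))))"
proof -
  have M0: "real M > 0" using l by simp
  have ss: "sin (p * (pi * real l / real M)) * sin (q * (pi * real l / real M)) =
      (cos ((d * pi) * (real l / real M)) - cos ((s * pi) * (real l / real M) + pi * real l)) / 2"
  proof -
    have "p * (pi * real l / real M) - q * (pi * real l / real M) = (d * pi) * (real l / real M)"
      unfolding d[symmetric] by (simp add: algebra_simps)
    moreover have "p * (pi * real l / real M) + q * (pi * real l / real M) = (s * pi) * (real l / real M) + pi * real l"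
    proof -
      have "p * (pi * real l / real M) + q * (pi * real l / real M) = (p + q) * (pi * real l / real M)"
        by (rule distrib_right[symmetric])
      also have "\<dots> = (s * pi) * (real l / real M) + real M * (pi * real l / real M)"
        unfolding sp using M0 by (simp add: field_simps)
      also have "real M * (pi * real l / real M) = pi * real l" using M0 by simp
      finally show ?thesis .
    qed
    ultimately show ?thesis by (simp add: sin_sin_prod)
  qed
  show ?thesis
    unfolding ss cos_shift dd_gg[OF l] using M0 by (simp add: field_simps)
qed

lemma rpow_cos:
  assumes x: "x \<in> {-int m..int m}" and y: "y \<in> {-int m..int m}"
  shows "mat_rpow {-int m..int m} hbar a x y =
     (1 / real (Mm m)) * (\<Sum>l\<in>{1..<Mm m}. gg a (real l / real (Mm m)) * cos ((real_of_int (x - y) * pi) * (real l / real (Mm m))))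
     - (1 / real (Mm m)) * (\<Sum>l\<in>{1..<Mm m}. (-1) ^ l * (gg a (real l / real (Mm m)) * cos ((real_of_int (x + y) * pi) * (real l / real (Mm m)))))"
proof -
  define M where "M = Mm m"
  define p where "p = real_of_int (x + int m + 1)"
  define q where "q = real_of_int (y + int m + 1)"
  define G where "G t = 2 / real M * (sin (p * (pi * real_of_int t / real M)) * sin (q * (pi * real_of_int t / real M)))
      * (2 - 2 * cos (pi * real_of_int t / real M)) powr a" for t :: int
  have "mat_rpow {-int m..int m} hbar a x y = (\<Sum>l\<in>{-int m..int m}. uu m x l * dd m l powr a * uu m y l)"
    by (rule hbar_rpow[OF x y])
  also have "\<dots> = (\<Sum>l\<in>{-int m..int m}. G (l + int m + 1))"
    unfolding G_def uu_def dd_def p_def q_def M_def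
    by (intro sum.cong refl) (simp add: mult_ac sqrt_sqrt_mult)
  also have "\<dots> = (\<Sum>l\<in>{1..<M}. G (int l))"
    unfolding M_def by (rule sum_shift)
  also have "\<dots> = (\<Sum>l\<in>{1..<M}. (1 / real M) * (gg a (real l / real M) * cos ((real_of_int (x - y) * pi) * (real l / real M)))
       - (1 / real M) * ((-1) ^ l * (gg a (real l / real M) * cos ((real_of_int (x + y) * pi) * (real l / real M)))))"
  proof (intro sum.cong refl)
    fix l assume l: "l \<in> {1..<M}"
    have d: "p - q = real_of_int (x - y)" by (simp add: p_def q_def)
    have s: "p + q = real_of_int (x + y) + real M" by (simp add: p_def q_def M_def Mm_def)
    show "G (int l) = (1 / real M) * (gg a (real l / real M) * cos ((real_of_int (x - y) * pi) * (real l / real M)))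
       - (1 / real M) * ((-1) ^ l * (gg a (real l / real M) * cos ((real_of_int (x + y) * pi) * (real l / real M))))"
      unfolding G_def using pt_formula[OF _ _ d s, of l a] l by simp
  qed
  also have "\<dots> = (1 / real M) * (\<Sum>l\<in>{1..<M}. gg a (real l / real M) * cos ((real_of_int (x - y) * pi) * (real l / real M)))
     - (1 / real M) * (\<Sum>l\<in>{1..<M}. (-1) ^ l * (gg a (real l / real M) * cos ((real_of_int (x + y) * pi) * (real l / real M))))"
    by (simp only: sum_subtractf sum_distrib_left)
  finally show ?thesis unfolding M_def .
qed

lemma C1_nonneg: "a > -1/2 \<Longrightarrow> 0 \<le> C1 a"
  using Ks_nonneg[of a] by (simp add: C1_def)

lemma C2_nonneg: "a > -1/2 \<Longrightarrow> 0 \<le> C2 a"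
  using Ks_nonneg[of a] by (simp add: C2_def)

lemma cos_abs_int: "cos (real_of_int \<bar>r\<bar> * c) = cos (real_of_int r * c)"
  by (cases "r \<ge> 0") (auto simp: abs_if)

lemma entry_bound:
  assumes a: "a > -1/2" and nm: "n \<le> m" and x: "x \<in> {-int n..int n}" and y: "y \<in> {-int n..int n}"
  shows "\<bar>mat_rpow {-int m..int m} hbar a x y - integral {0..1} (\<lambda>t. gg a t * cos (real_of_int \<bar>x - y\<bar> * pi * t))\<bar>
     \<le> (C1 a + C2 a) * (real (Mm m) powr bet a + 8 * real n) / real (Mm m)"
proof -
  define M where "M = Mm m"
  have M2: "M \<ge> 2" "M > 0" by (auto simp: M_def Mm_def)
  define w1 where "w1 = real_of_int (x - y) * pi"
  define w2 where "w2 = real_of_int (x + y) * pi"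
  define P where "P = real M powr bet a"
  have xm: "x \<in> {-int m..int m}" "y \<in> {-int m..int m}" using x y nm by auto
  have R: "mat_rpow {-int m..int m} hbar a x y =
     (1 / real M) * (\<Sum>l\<in>{1..<M}. gg a (real l / real M) * cos (w1 * (real l / real M)))
     - (1 / real M) * (\<Sum>l\<in>{1..<M}. (-1) ^ l * (gg a (real l / real M) * cos (w2 * (real l / real M))))"
    using rpow_cos[OF xm, of a] unfolding M_def w1_def w2_def .
  have Z: "integral {0..1} (\<lambda>t. gg a t * cos (real_of_int \<bar>x - y\<bar> * pi * t)) = integral {0..1} (\<lambda>t. gg a t * cos (w1 * t))"
  proof -
    have "(\<lambda>t. gg a t * cos (real_of_int \<bar>x - y\<bar> * pi * t)) = (\<lambda>t. gg a t * cos (w1 * t))"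
      using cos_abs_int[of "x - y" "pi * t" for t] unfolding w1_def by (simp add: mult.assoc)
    then show ?thesis by simp
  qed
  have e1: "\<bar>(1 / real M) * (\<Sum>l\<in>{1..<M}. gg a (real l / real M) * cos (w1 * (real l / real M))) - integral {0..1} (\<lambda>t. gg a t * cos (w1 * t))\<bar>
      \<le> C1 a * (P + \<bar>w1\<bar>) / real M"
    using E1[OF a M2(2)] unfolding P_def .
  have e2: "\<bar>(1 / real M) * (\<Sum>l\<in>{1..<M}. (-1) ^ l * (gg a (real l / real M) * cos (w2 * (real l / real M))))\<bar>
      \<le> C2 a * (P + \<bar>w2\<bar>) / real M"
    using E2[OF a M2(1)] unfolding P_def .
  have w1b: "\<bar>w1\<bar> \<le> 8 * real n"
  proof -
    have "\<bar>real_of_int (x - y)\<bar> \<le> 2 * real n" using x y by auto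
    then have "\<bar>w1\<bar> \<le> 2 * real n * pi" unfolding w1_def abs_mult using pi_gt_zero by (simp add: mult_right_mono)
    also have "\<dots> \<le> 2 * real n * 4" using pi_less_4 by (intro mult_left_mono) auto
    finally show ?thesis by simp
  qed
  have w2b: "\<bar>w2\<bar> \<le> 8 * real n"
  proof -
    have "\<bar>real_of_int (x + y)\<bar> \<le> 2 * real n" using x y by auto
    then have "\<bar>w2\<bar> \<le> 2 * real n * pi" unfolding w2_def abs_mult using pi_gt_zero by (simp add: mult_right_mono)
    also have "\<dots> \<le> 2 * real n * 4" using pi_less_4 by (intro mult_left_mono) auto
    finally show ?thesis by simp
  qed
  have c1: "C1 a * (P + \<bar>w1\<bar>) \<le> C1 a * (P + 8 * real n)" using C1_nonneg[OF a] w1b by (intro mult_left_mono) auto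
  have c2: "C2 a * (P + \<bar>w2\<bar>) \<le> C2 a * (P + 8 * real n)" using C2_nonneg[OF a] w2b by (intro mult_left_mono) auto
  have "\<bar>mat_rpow {-int m..int m} hbar a x y - integral {0..1} (\<lambda>t. gg a t * cos (real_of_int \<bar>x - y\<bar> * pi * t))\<bar>
      \<le> C1 a * (P + \<bar>w1\<bar>) / real M + C2 a * (P + \<bar>w2\<bar>) / real M"
    unfolding R Z using e1 e2 by linarith
  also have "\<dots> \<le> C1 a * (P + 8 * real n) / real M + C2 a * (P + 8 * real n) / real M"
    using c1 c2 M2 by (intro add_mono divide_right_mono) auto
  also have "\<dots> = (C1 a + C2 a) * (P + 8 * real n) / real M" by (simp add: add_divide_distrib distrib_right)
  finally show ?thesis unfolding P_def M_def .
qed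

lemma card_sym: "card {-int n..int n} = 2 * n + 1"
  by simp

lemma fin_pos:
  fixes K :: real and n m :: nat
  assumes K: "0 \<le> K" and nm: "n \<le> m"
  shows "K * (1 + 8 * real n) / real (2 * m + 2) \<le> 8 * K * (real (2 * n + 1) / real (2 * m + 1))"
proof -
  have "(1 + 8 * real n) / real (2 * m + 2) \<le> (8 * real (2 * n + 1)) / real (2 * m + 1)"
    by (intro frac_le) auto
  then have "K * ((1 + 8 * real n) / real (2 * m + 2)) \<le> K * ((8 * real (2 * n + 1)) / real (2 * m + 1))"
    using K by (intro mult_left_mono) auto
  then show ?thesis by (simp add: field_simps)
qed

lemma fin_neg:
  fixes K a :: real and n m :: nat
  assumes K: "0 \<le> K" and a: "-1/2 < a" "a < 0"
  shows "K * (real (2 * m + 2) powr (- (2 * a)) + 8 * real n) / real (2 * m + 2)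
     \<le> 8 * K * ((real (2 * m + 1) powr (-2 * a) + real (2 * n + 1) powr (1 - 2 * a)) / real (2 * m + 1))"
proof -
  define N where "N = real (2 * m + 1)"
  define N0 where "N0 = real (2 * n + 1)"
  have N1: "1 \<le> N" "1 \<le> N0" by (auto simp: N_def N0_def)
  have "real (2 * m + 2) powr (- (2 * a)) \<le> (2 * N) powr (- (2 * a))"
    using a by (intro powr_mono2) (auto simp: N_def)
  also have "\<dots> = 2 powr (- (2 * a)) * N powr (- (2 * a))" by (simp add: powr_mult)
  also have "\<dots> \<le> 2 * N powr (- (2 * a))"
  proof (intro mult_right_mono)
    show "2 powr (- (2 * a)) \<le> (2::real)"
      using powr_mono[of "- (2 * a)" 1 "2::real"] a by simp
  qed simp
  finally have p1: "real (2 * m + 2) powr (- (2 * a)) \<le> 2 * N powr (- (2 * a))" .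
  have "real n \<le> N0" by (simp add: N0_def)
  also have "N0 = N0 powr 1" using N1 by simp
  also have "\<dots> \<le> N0 powr (1 - 2 * a)" using N1 a by (intro powr_mono) auto
  finally have p2: "8 * real n \<le> 8 * N0 powr (1 - 2 * a)" by simp
  have num0: "0 \<le> real (2 * m + 2) powr (- (2 * a)) + 8 * real n" by simp
  have "(real (2 * m + 2) powr (- (2 * a)) + 8 * real n) / real (2 * m + 2)
      \<le> (8 * (N powr (-2 * a) + N0 powr (1 - 2 * a))) / N"
  proof (rule frac_le)
    show "0 \<le> 8 * (N powr (-2 * a) + N0 powr (1 - 2 * a))" by simp
    show "real (2 * m + 2) powr (- (2 * a)) + 8 * real n \<le> 8 * (N powr (-2 * a) + N0 powr (1 - 2 * a))"
    proof -
      have q: "N powr (-2 * a) = N powr (- (2 * a))" by simp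
      have "real (2 * m + 2) powr (- (2 * a)) + 8 * real n \<le> 2 * N powr (- (2 * a)) + 8 * N0 powr (1 - 2 * a)"
        by (rule add_mono[OF p1 p2])
      also have "\<dots> \<le> 8 * (N powr (- (2 * a)) + N0 powr (1 - 2 * a))"
        using powr_ge_zero[of N "- (2 * a)"] by simp
      finally show ?thesis unfolding q .
    qed
    show "0 < N" using N1 by simp
    show "N \<le> real (2 * m + 2)" by (simp add: N_def)
  qed
  then have "K * ((real (2 * m + 2) powr (- (2 * a)) + 8 * real n) / real (2 * m + 2))
      \<le> K * ((8 * (N powr (-2 * a) + N0 powr (1 - 2 * a))) / N)"
    using K by (intro mult_left_mono) auto
  then show ?thesis unfolding N_def N0_def by (simp add: field_simps)
qed

lemma key_bound:
  assumes a: "a > -1/2" and nm: "n \<le> m"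
    and j: "j \<in> {1..int (card {-int n..int n})}" and k: "k \<in> {1..int (card {-int n..int n})}"
  shows "\<bar>hLambda n m a j k - hZ a j k\<bar> \<le> (C1 a + C2 a) * (real (Mm m) powr bet a + 8 * real n) / real (Mm m)"
proof -
  define x where "x = j - int n - 1"
  define y where "y = k - int n - 1"
  have xy: "x \<in> {-int n..int n}" "y \<in> {-int n..int n}" using j k by (auto simp: x_def y_def)
  have "\<bar>j - k\<bar> = \<bar>x - y\<bar>" by (simp add: x_def y_def)
  then have Z: "hZ a j k = integral {0..1} (\<lambda>t. gg a t * cos (real_of_int \<bar>x - y\<bar> * pi * t))"
    using hZ_integral[OF a, of j k] by simp
  have L: "hLambda n m a j k = mat_rpow {-int m..int m} hbar a x y"
    by (simp add: hLambda_def x_def y_def)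
  show ?thesis unfolding Z L by (rule entry_bound[OF a nm xy])
qed

theorem lemma3p3:
  fixes a :: real
  assumes "a > -1/2"
  shows "(0 \<le> a \<longrightarrow> (\<exists>C. \<forall>n m :: nat. n \<le> m \<longrightarrow>
            (\<forall>j \<in> {1..int (card {-int n..int n})}. \<forall>k \<in> {1..int (card {-int n..int n})}.
               \<bar>hLambda n m a j k - hZ a j k\<bar>
                 \<le> C * (real (card {-int n..int n}) / real (card {-int m..int m})))))
       \<and> (a < 0 \<longrightarrow> (\<exists>C. \<forall>n m :: nat. n \<le> m \<longrightarrow>
            (\<forall>j \<in> {1..int (card {-int n..int n})}. \<forall>k \<in> {1..int (card {-int n..int n})}.
               \<bar>hLambda n m a j k - hZ a j k\<bar>
                 \<le> C * ((real (card {-int m..int m}) powr (-2 * a)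
                         + real (card {-int n..int n}) powr (1 - 2 * a))
                        / real (card {-int m..int m})))))"
proof -
  define K where "K = C1 a + C2 a"
  have K0: "0 \<le> K" using C1_nonneg[OF assms] C2_nonneg[OF assms] by (simp add: K_def)
  show ?thesis
  proof (intro conjI impI)
    assume a0: "0 \<le> a"
    show "\<exists>C. \<forall>n m :: nat. n \<le> m \<longrightarrow>
            (\<forall>j \<in> {1..int (card {-int n..int n})}. \<forall>k \<in> {1..int (card {-int n..int n})}.
               \<bar>hLambda n m a j k - hZ a j k\<bar>
                 \<le> C * (real (card {-int n..int n}) / real (card {-int m..int m})))"
    proof (intro exI[of _ "8 * K"] allI impI ballI)
      fix n m :: nat and j k assume nm: "n \<le> m" and j: "j \<in> {1..int (card {-int n..int n})}"
        and k: "k \<in> {1..int (card {-int n..int n})}"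
      have b: "bet a = 0" using a0 by (simp add: bet_def)
      have "\<bar>hLambda n m a j k - hZ a j k\<bar> \<le> K * (1 + 8 * real n) / real (2 * m + 2)"
        using key_bound[OF assms nm j k] b by (simp add: K_def Mm_def)
      also have "\<dots> \<le> 8 * K * (real (2 * n + 1) / real (2 * m + 1))"
        by (rule fin_pos[OF K0 nm])
      finally show "\<bar>hLambda n m a j k - hZ a j k\<bar> \<le> 8 * K * (real (card {-int n..int n}) / real (card {-int m..int m}))"
        by (simp only: card_sym)
    qed
  next
    assume a0: "a < 0"
    show "\<exists>C. \<forall>n m :: nat. n \<le> m \<longrightarrow>
            (\<forall>j \<in> {1..int (card {-int n..int n})}. \<forall>k \<in> {1..int (card {-int n..int n})}.
               \<bar>hLambda n m a j k - hZ a j k\<bar>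
                 \<le> C * ((real (card {-int m..int m}) powr (-2 * a)
                         + real (card {-int n..int n}) powr (1 - 2 * a))
                        / real (card {-int m..int m})))"
    proof (intro exI[of _ "8 * K"] allI impI ballI)
      fix n m :: nat and j k assume nm: "n \<le> m" and j: "j \<in> {1..int (card {-int n..int n})}"
        and k: "k \<in> {1..int (card {-int n..int n})}"
      have b: "bet a = - (2 * a)" using a0 by (simp add: bet_def)
      have "\<bar>hLambda n m a j k - hZ a j k\<bar> \<le> K * (real (2 * m + 2) powr (- (2 * a)) + 8 * real n) / real (2 * m + 2)"
        using key_bound[OF assms nm j k] b by (simp add: K_def Mm_def)
      also have "\<dots> \<le> 8 * K * ((real (2 * m + 1) powr (-2 * a) + real (2 * n + 1) powr (1 - 2 * a)) / real (2 * m + 1))"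
        by (rule fin_neg[OF K0 assms a0])
      finally show "\<bar>hLambda n m a j k - hZ a j k\<bar> \<le> 8 * K * ((real (card {-int m..int m}) powr (-2 * a)
                         + real (card {-int n..int n}) powr (1 - 2 * a)) / real (card {-int m..int m}))"
        by (simp only: card_sym)
    qed
  qed
qed

end
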